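(* Let $\sigma:\mathbb{R}\to\mathbb{R}$ be bounded and differentiable, with derivative that is Lipschitz continuous and bounded. Let $d,r,L,K_n,n\in\mathbb{N}$ with $r\ge 2d$, $c_2>0$, data $(X_1,Y_1),\dots,(X_n,Y_n)\in\mathbb{R}^d\times\mathbb{R}$, and let $\alpha_n\ge1$, $L_n>0$, $t_n\ge L_n$, $\gamma_n^*\ge1$, $B_n\ge1$. Let $\mathbf{w}_1,\mathbf{w}_2,\mathbf{v}$ be weight vectors such that $\max\{|(\mathbf{w}_1)^{(L)}_{1,1,k}|,|(\mathbf{w}_2)^{(L)}_{1,1,k}|\}\le\gamma_n^*$ for $k=1,\dots,K_n$, $\max\{|(\mathbf{w}_1)^{(l)}_{k,i,j}|,|(\mathbf{w}_2)^{(l)}_{k,i,j}|\}\le B_n$ for all $k,i,j$ and $l=1,\dots,L-1$, and \[ \|\mathbf{w}_2-\mathbf{v}\|^2\le 8\cdot\frac{t_n}{L_n}\cdot\max\{F_n(\mathbf{v}),1\}. \] Then \[ \|(\nabla_{\mathbf{w}}F_n)(\mathbf{w}_1)-(\nabla_{\mathbf{w}}F_n)(\mathbf{w}_2)\|\le c_7\cdot\max\{\sqrt{F_n(\mathbf{v})},1\}\cdot(\gamma_n^* )^2\cdot B_n^{3L}\cdot\alpha_n^3\cdot K_n^{3/2}\cdot\sqrt{\frac{t_n}{L_n}}\cdot\|\mathbf{w}_1-\mathbf{w}_2\|, \] where $c_7>0$ is a constant depending only on $\sigma,d,r,L,c_2$.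
   Context: For a weight vector $\mathbf{w}=(w^{(l)}_{k,i,j})$ define $f_{\mathbf{w}}(x)=\sum_{j=1}^{K_n} w^{(L)}_{1,1,j}f^{(L)}_{j,1}(x)$ ($x\in\mathbb{R}^d$), where for $k\in\{1,\dots,K_n\}$, $i\in\{1,\dots,r\}$: $f^{(l)}_{k,i}(x)=\sigma\big(\sum_{j=1}^r w^{(l-1)}_{k,i,j}f^{(l-1)}_{k,j}(x)+w^{(l-1)}_{k,i,0}\big)$ for $l=2,\dots,L$ and $f^{(1)}_{k,i}(x)=\sigma\big(\sum_{j=1}^d w^{(0)}_{k,i,j}x^{(j)}+w^{(0)}_{k,i,0}\big)$. The weight vector consists of all these weights (outer weights $w^{(L)}_{1,1,j}$, $j=1,\dots,K_n$; $w^{(l)}_{k,i,j}$, $1\le l\le L-1$, $j\in\{0,\dots,r\}$; $w^{(0)}_{k,i,j}$, $j\in\{0,\dots,d\}$); $(\mathbf{w})^{(l)}_{k,i,j}$ denotes the corresponding entry of $\mathbf{w}$. Define $F_n(\mathbf{w})=\frac1n\sum_{i=1}^n|f_{\mathbf{w}}(X_i)-Y_i|^2\,1_{[-\alpha_n,\alpha_n]^d}(X_i)+c_2\sum_{j=1}^{K_n}|w^{(L)}_{1,1,j}|^2$. $\|\cdot\|$ denotes the Euclidean norm. *)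

theory Defs
  imports "HOL-Analysis.Analysis"
begin

text \<open>Weight vectors: functions on index tuples (l,k,i,j); only entries in the index set
  nn_index d r L K are meaningful. Inputs x in R^d are functions nat => real with
  components 1..d.\<close>

type_synonym weights = "nat \<times> nat \<times> nat \<times> nat \<Rightarrow> real"

definition nn_index :: "nat \<Rightarrow> nat \<Rightarrow> nat \<Rightarrow> nat \<Rightarrow> (nat \<times> nat \<times> nat \<times> nat) set" where
  "nn_index d r L K =
     {(L, 1, 1, j) | j. j \<in> {1..K}}
   \<union> {(l, k, i, j) | l k i j. l \<in> {1..L-1} \<and> k \<in> {1..K} \<and> i \<in> {1..r} \<and> j \<in> {0..r}}
   \<union> {(0, k, i, j) | k i j. k \<in> {1..K} \<and> i \<in> {1..r} \<and> j \<in> {0..d}}"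

fun nn_layer :: "(real \<Rightarrow> real) \<Rightarrow> nat \<Rightarrow> nat \<Rightarrow> weights \<Rightarrow> (nat \<Rightarrow> real)
                 \<Rightarrow> nat \<Rightarrow> nat \<Rightarrow> nat \<Rightarrow> real" where
  "nn_layer \<sigma> d r w x 0 k i = 0"
| "nn_layer \<sigma> d r w x (Suc 0) k i =
     \<sigma> ((\<Sum>j=1..d. w (0, k, i, j) * x j) + w (0, k, i, 0))"
| "nn_layer \<sigma> d r w x (Suc (Suc l)) k i =
     \<sigma> ((\<Sum>j=1..r. w (Suc l, k, i, j) * nn_layer \<sigma> d r w x (Suc l) k j) + w (Suc l, k, i, 0))"

definition nn_f :: "(real \<Rightarrow> real) \<Rightarrow> nat \<Rightarrow> nat \<Rightarrow> nat \<Rightarrow> nat \<Rightarrow> weights \<Rightarrow> (nat \<Rightarrow> real) \<Rightarrow> real" where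
  "nn_f \<sigma> d r L K w x = (\<Sum>j=1..K. w (L, 1, 1, j) * nn_layer \<sigma> d r w x L j 1)"

definition Fn :: "(real \<Rightarrow> real) \<Rightarrow> nat \<Rightarrow> nat \<Rightarrow> nat \<Rightarrow> nat \<Rightarrow> real \<Rightarrow> nat
                  \<Rightarrow> (nat \<Rightarrow> nat \<Rightarrow> real) \<Rightarrow> (nat \<Rightarrow> real) \<Rightarrow> real \<Rightarrow> weights \<Rightarrow> real" where
  "Fn \<sigma> d r L K c2 n X Y \<alpha> w =
     (1 / real n) * (\<Sum>i=1..n. \<bar>nn_f \<sigma> d r L K w (X i) - Y i\<bar>^2 *
         (if (\<forall>j\<in>{1..d}. \<bar>X i j\<bar> \<le> \<alpha>) then 1 else 0))
     + c2 * (\<Sum>j=1..K. (w (L, 1, 1, j))^2)"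

definition wpartial :: "(weights \<Rightarrow> real) \<Rightarrow> weights \<Rightarrow> nat \<times> nat \<times> nat \<times> nat \<Rightarrow> real" where
  "wpartial F w p = deriv (\<lambda>t. F (w(p := t))) (w p)"

definition wnorm :: "(nat \<times> nat \<times> nat \<times> nat) set \<Rightarrow> weights \<Rightarrow> real" where
  "wnorm I u = sqrt (\<Sum>p\<in>I. (u p)^2)"

end

theory Submission
  imports Defs
begin

lemma one_le_pow_mult: "(B::real) \<ge> 1 \<Longrightarrow> \<alpha> \<ge> 1 \<Longrightarrow> 1 \<le> B^n * \<alpha>"
  by (metis mult_mono' one_le_power mult_1 zero_le_one)

lemma le_pow_mult: "(B::real) \<ge> 1 \<Longrightarrow> \<alpha> \<ge> 1 \<Longrightarrow> \<delta> \<ge> 0 \<Longrightarrow> \<delta> \<le> B^n * \<alpha> * \<delta>"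
  using one_le_pow_mult[of B \<alpha> n] by (simp add: mult_le_cancel_right1)

locale nnl =
  fixes \<sigma> :: "real \<Rightarrow> real" and d r L :: nat and M D Lc :: real
  assumes sM: "\<And>x. \<bar>\<sigma> x\<bar> \<le> M" and M1: "M \<ge> 1"
  and sdiff: "\<And>x. (\<sigma> has_real_derivative deriv \<sigma> x) (at x)"
  and sD: "\<And>x. \<bar>deriv \<sigma> x\<bar> \<le> D" and D1: "D \<ge> 1"
  and sL: "\<And>x y. \<bar>deriv \<sigma> x - deriv \<sigma> y\<bar> \<le> Lc * \<bar>x - y\<bar>" and Lc0: "Lc \<ge> 0"
  and r1: "r \<ge> 1" and L1: "L \<ge> 1"
begin

abbreviation lay where "lay \<equiv> nn_layer \<sigma> d r"

fun pre :: "weights \<Rightarrow> (nat \<Rightarrow> real) \<Rightarrow> nat \<Rightarrow> nat \<Rightarrow> nat \<Rightarrow> real" where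
  "pre w x 0 k i = 0"
| "pre w x (Suc 0) k i = (\<Sum>j=1..d. w (0, k, i, j) * x j) + w (0, k, i, 0)"
| "pre w x (Suc (Suc l)) k i = (\<Sum>j=1..r. w (Suc l, k, i, j) * lay w x (Suc l) k j) + w (Suc l, k, i, 0)"

lemma lay_pre: "m > 0 \<Longrightarrow> lay w x m k i = \<sigma> (pre w x m k i)"
  by (induction w x m k i rule: pre.induct) auto

lemma lay_bound: "\<bar>lay w x m k i\<bar> \<le> M"
  using M1 sM by (induction w x m k i rule: pre.induct) auto

lemma sigma_lip: "\<bar>\<sigma> a - \<sigma> b\<bar> \<le> D * \<bar>a - b\<bar>"
proof -
  have main: "\<bar>\<sigma> b - \<sigma> a\<bar> \<le> D * \<bar>b - a\<bar>" if ab: "a < b" for a b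
  proof -
    have "\<exists>z. a < z \<and> z < b \<and> \<sigma> b - \<sigma> a = (b - a) * deriv \<sigma> z"
      by (rule MVT2[OF ab]) (rule sdiff)
    then obtain z where "\<sigma> b - \<sigma> a = (b - a) * deriv \<sigma> z" by blast
    then have "\<bar>\<sigma> b - \<sigma> a\<bar> = \<bar>b - a\<bar> * \<bar>deriv \<sigma> z\<bar>" by (simp add: abs_mult)
    also have "\<dots> \<le> \<bar>b - a\<bar> * D" by (rule mult_left_mono[OF sD]) simp
    finally show ?thesis by (simp add: mult.commute)
  qed
  consider "a < b" | "a = b" | "b < a" by linarith
  then show ?thesis
  proof cases
    case 1
    then show ?thesis using main[of a b] by (simp add: abs_minus_commute)
  next
    case 3
    then show ?thesis using main[of b a] by simp
  qed simp
qed

definition Bd :: "real \<Rightarrow> nat \<Rightarrow> weights \<Rightarrow> bool" where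
  "Bd B k w \<longleftrightarrow> (\<forall>l\<in>{1..L-1}. \<forall>i\<in>{1..r}. \<forall>j\<in>{0..r}. \<bar>w (l, k, i, j)\<bar> \<le> B)"

definition S0 :: "(nat \<times> nat \<times> nat) set" where
  "S0 = ({1..L-1} \<times> {1..r} \<times> {0..r}) \<union> ({0} \<times> {1..r} \<times> {0..d})"

definition Dlt :: "nat \<Rightarrow> real \<Rightarrow> weights \<Rightarrow> weights \<Rightarrow> bool" where
  "Dlt k \<delta> w1 w2 \<longleftrightarrow> (\<forall>l i j. (l, i, j) \<in> S0 \<longrightarrow> \<bar>w1 (l, k, i, j) - w2 (l, k, i, j)\<bar> \<le> \<delta>)"

definition Xb :: "real \<Rightarrow> (nat \<Rightarrow> real) \<Rightarrow> bool" where
  "Xb \<alpha> x \<longleftrightarrow> (\<forall>j\<in>{1..d}. \<bar>x j\<bar> \<le> \<alpha>)"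

lemma nat_induct012:
  assumes "P 0" "P (Suc 0)" "\<And>l. P (Suc l) \<Longrightarrow> P (Suc (Suc l))"
  shows "P m"
proof (induction m)
  case (Suc m)
  show ?case
  proof (cases m)
    case (Suc l)
    then show ?thesis using Suc.IH assms(3) by simp
  qed (use assms(2) in simp)
qed (rule assms(1))

lemma abs_mult_le:
  assumes "\<bar>a\<bar> \<le> A" "\<bar>b\<bar> \<le> B" shows "\<bar>a * b\<bar> \<le> A * (B::real)"
proof -
  have "0 \<le> A" using assms(1) abs_ge_zero[of a] by linarith
  then show ?thesis unfolding abs_mult by (rule mult_mono[OF assms(1,2) _ abs_ge_zero])
qed

lemma pre_lip:
  "\<exists>C\<ge>0. \<forall>B \<alpha> \<delta> w1 w2 x k i. B \<ge> 1 \<longrightarrow> \<alpha> \<ge> 1 \<longrightarrow> \<delta> \<ge> 0 \<longrightarrow> Bd B k w1 \<longrightarrow> Bd B k w2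
     \<longrightarrow> Dlt k \<delta> w1 w2 \<longrightarrow> Xb \<alpha> x \<longrightarrow> i \<in> {1..r} \<longrightarrow> m \<le> L \<longrightarrow>
     \<bar>pre w1 x m k i - pre w2 x m k i\<bar> \<le> C * B^m * \<alpha> * \<delta>"
proof (induction m rule: nat_induct012)
  case 1
  show ?case by (intro exI[of _ 0]) simp
next
  case 2
  show ?case
  proof (intro exI[of _ "real d + 1"] conjI allI impI)
    fix B \<alpha> \<delta> w1 w2 x k i
    assume B: "B \<ge> 1" and a: "\<alpha> \<ge> 1" and dl: "\<delta> \<ge> 0" and B1: "Bd B k w1" and B2: "Bd B k w2" and Dl: "Dlt k \<delta> w1 w2" and X: "Xb \<alpha> x"
      and i: "i \<in> {1..r}" and m: "Suc 0 \<le> L"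
    have dw: "\<bar>w1 (0, k, i, j) - w2 (0, k, i, j)\<bar> \<le> \<delta>" if "j \<in> {0..d}" for j
      using Dl that i unfolding Dlt_def S0_def by auto
    have "pre w1 x (Suc 0) k i - pre w2 x (Suc 0) k i
        = (\<Sum>j=1..d. (w1 (0, k, i, j) - w2 (0, k, i, j)) * x j) + (w1 (0, k, i, 0) - w2 (0, k, i, 0))"
      by (simp add: sum_subtractf left_diff_distrib)
    then have "\<bar>pre w1 x (Suc 0) k i - pre w2 x (Suc 0) k i\<bar>
        = \<bar>(\<Sum>j=1..d. (w1 (0, k, i, j) - w2 (0, k, i, j)) * x j) + (w1 (0, k, i, 0) - w2 (0, k, i, 0))\<bar>"
      by simp
    also have "\<dots> \<le> (\<Sum>j=1..d. \<bar>(w1 (0, k, i, j) - w2 (0, k, i, j)) * x j\<bar>) + \<bar>w1 (0, k, i, 0) - w2 (0, k, i, 0)\<bar>"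
      by (rule order_trans[OF abs_triangle_ineq add_right_mono[OF sum_abs]])
    also have "\<dots> \<le> (\<Sum>j=1..d. \<delta> * \<alpha>) + \<delta>"
    proof (intro add_mono sum_mono)
      fix j assume j: "j \<in> {1..d}"
      have "\<bar>x j\<bar> \<le> \<alpha>" using X j unfolding Xb_def by auto
      then show "\<bar>(w1 (0, k, i, j) - w2 (0, k, i, j)) * x j\<bar> \<le> \<delta> * \<alpha>"
        unfolding abs_mult using dw[of j] j dl by (intro mult_mono) auto
    qed (use dw in auto)
    also have "\<dots> = real d * \<alpha> * \<delta> + \<delta>" by simp
    also have "\<dots> \<le> (real d + 1) * B^Suc 0 * \<alpha> * \<delta>"
    proof -
      have "real d * \<alpha> * \<delta> \<le> real d * B * \<alpha> * \<delta>"
      proof -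
        have "real d * \<alpha> * \<delta> * 1 \<le> real d * \<alpha> * \<delta> * B"
          using B a dl by (intro mult_left_mono) auto
        then show ?thesis by (simp add: algebra_simps)
      qed
      moreover have "\<delta> \<le> B * \<alpha> * \<delta>" using le_pow_mult[OF B a dl, of 1] by simp
      ultimately show ?thesis by (simp add: algebra_simps)
    qed
    finally show "\<bar>pre w1 x (Suc 0) k i - pre w2 x (Suc 0) k i\<bar> \<le> (real d + 1) * B ^ Suc 0 * \<alpha> * \<delta>" .
  qed simp
next
  case (3 l)
  then obtain C where C0: "C \<ge> 0" and IH: "\<And>B \<alpha> \<delta> w1 w2 x k i. B \<ge> 1 \<Longrightarrow> \<alpha> \<ge> 1 \<Longrightarrow> \<delta> \<ge> 0 \<Longrightarrow> Bd B k w1 \<Longrightarrow> Bd B k w2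
     \<Longrightarrow> Dlt k \<delta> w1 w2 \<Longrightarrow> Xb \<alpha> x \<Longrightarrow> i \<in> {1..r} \<Longrightarrow> Suc l \<le> L \<Longrightarrow>
     \<bar>pre w1 x (Suc l) k i - pre w2 x (Suc l) k i\<bar> \<le> C * B^(Suc l) * \<alpha> * \<delta>"
    by blast
  show ?case
  proof (intro exI[of _ "real r * (M + D * C) + 1"] conjI allI impI)
    fix B \<alpha> \<delta> w1 w2 x k i
    assume B: "B \<ge> 1" and a: "\<alpha> \<ge> 1" and dl: "\<delta> \<ge> 0" and B1: "Bd B k w1" and B2: "Bd B k w2" and Dl: "Dlt k \<delta> w1 w2" and X: "Xb \<alpha> x"
      and i: "i \<in> {1..r}" and m: "Suc (Suc l) \<le> L"
    let ?P = "B^Suc (Suc l) * \<alpha> * \<delta>"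
    have P0: "0 \<le> B^Suc l * \<alpha> * \<delta>" using B a dl by simp
    have dw: "\<bar>w1 (Suc l, k, i, j) - w2 (Suc l, k, i, j)\<bar> \<le> \<delta>" if "j \<in> {0..r}" for j
      using Dl that i m unfolding Dlt_def S0_def by auto
    have bw: "\<bar>w2 (Suc l, k, i, j)\<bar> \<le> B" if "j \<in> {0..r}" for j
      using B2 that i m unfolding Bd_def by auto
    have dh: "\<bar>lay w1 x (Suc l) k j - lay w2 x (Suc l) k j\<bar> \<le> D * (C * B^Suc l * \<alpha> * \<delta>)" if j: "j \<in> {1..r}" for j
    proof -
      have "\<bar>lay w1 x (Suc l) k j - lay w2 x (Suc l) k j\<bar> \<le> D * \<bar>pre w1 x (Suc l) k j - pre w2 x (Suc l) k j\<bar>"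
        using sigma_lip by (simp add: lay_pre)
      also have "\<dots> \<le> D * (C * B^Suc l * \<alpha> * \<delta>)"
        using IH[OF B a dl B1 B2 Dl X j] m D1 by (intro mult_left_mono) auto
      finally show ?thesis .
    qed
    have tm: "\<bar>w1 (Suc l, k, i, j) * lay w1 x (Suc l) k j - w2 (Suc l, k, i, j) * lay w2 x (Suc l) k j\<bar>
        \<le> (M + D * C) * ?P" if j: "j \<in> {1..r}" for j
    proof -
      have "\<bar>w1 (Suc l, k, i, j) * lay w1 x (Suc l) k j - w2 (Suc l, k, i, j) * lay w2 x (Suc l) k j\<bar>
         = \<bar>(w1 (Suc l, k, i, j) - w2 (Suc l, k, i, j)) * lay w1 x (Suc l) k j
            + w2 (Suc l, k, i, j) * (lay w1 x (Suc l) k j - lay w2 x (Suc l) k j)\<bar>"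
        by (simp add: algebra_simps)
      also have "\<dots> \<le> \<bar>(w1 (Suc l, k, i, j) - w2 (Suc l, k, i, j)) * lay w1 x (Suc l) k j\<bar>
            + \<bar>w2 (Suc l, k, i, j) * (lay w1 x (Suc l) k j - lay w2 x (Suc l) k j)\<bar>"
        by (rule abs_triangle_ineq)
      also have "\<dots> \<le> \<delta> * M + B * (D * (C * B^Suc l * \<alpha> * \<delta>))"
        by (intro add_mono abs_mult_le dw bw dh lay_bound) (use j in auto)
      also have "\<dots> \<le> ?P * M + D * C * ?P"
      proof -
        have "B * (D * (C * B^Suc l * \<alpha> * \<delta>)) = D * C * ?P" by (simp add: algebra_simps)
        moreover have "\<delta> * M \<le> ?P * M"
          using le_pow_mult[OF B a dl, of "Suc (Suc l)"] M1 by (intro mult_right_mono) auto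
        ultimately show ?thesis by linarith
      qed
      finally show ?thesis by (simp add: algebra_simps)
    qed
    have "pre w1 x (Suc (Suc l)) k i - pre w2 x (Suc (Suc l)) k i
        = (\<Sum>j=1..r. w1 (Suc l, k, i, j) * lay w1 x (Suc l) k j - w2 (Suc l, k, i, j) * lay w2 x (Suc l) k j)
            + (w1 (Suc l, k, i, 0) - w2 (Suc l, k, i, 0))"
      by (simp add: sum_subtractf)
    then have "\<bar>pre w1 x (Suc (Suc l)) k i - pre w2 x (Suc (Suc l)) k i\<bar>
        = \<bar>(\<Sum>j=1..r. w1 (Suc l, k, i, j) * lay w1 x (Suc l) k j - w2 (Suc l, k, i, j) * lay w2 x (Suc l) k j)
            + (w1 (Suc l, k, i, 0) - w2 (Suc l, k, i, 0))\<bar>"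
      by simp
    also have "\<dots> \<le> (\<Sum>j=1..r. \<bar>w1 (Suc l, k, i, j) * lay w1 x (Suc l) k j - w2 (Suc l, k, i, j) * lay w2 x (Suc l) k j\<bar>)
            + \<bar>w1 (Suc l, k, i, 0) - w2 (Suc l, k, i, 0)\<bar>"
      by (rule order_trans[OF abs_triangle_ineq add_right_mono[OF sum_abs]])
    also have "\<dots> \<le> (\<Sum>j=1..r. (M + D * C) * ?P) + ?P"
      using tm dw[of 0] le_pow_mult[OF B a dl, of "Suc (Suc l)"] by (intro add_mono sum_mono) auto
    also have "\<dots> = (real r * (M + D * C) + 1) * ?P" by (simp add: algebra_simps)
    finally show "\<bar>pre w1 x (Suc (Suc l)) k i - pre w2 x (Suc (Suc l)) k i\<bar> \<le> (real r * (M + D * C) + 1) * B ^ Suc (Suc l) * \<alpha> * \<delta>"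
      by (simp add: mult.assoc)
  qed (use M1 D1 C0 in simp)
qed
end

definition ind :: "'a \<Rightarrow> 'a \<Rightarrow> real" where "ind p q = (if p = q then 1 else 0)"

lemma upd_deriv: "((\<lambda>t. (w(p:=t)) q) has_real_derivative ind p q) (at s)"
  by (cases "p = q") (simp_all add: ind_def)

lemma ind_abs: "\<bar>ind p q\<bar> \<le> 1" "0 \<le> ind p q"
  by (auto simp: ind_def)

context nnl
begin

fun dl :: "weights \<Rightarrow> nat \<times> nat \<times> nat \<times> nat \<Rightarrow> (nat \<Rightarrow> real) \<Rightarrow> nat \<Rightarrow> nat \<Rightarrow> nat \<Rightarrow> real" where
  "dl w p x 0 k i = 0"
| "dl w p x (Suc 0) k i = deriv \<sigma> (pre w x (Suc 0) k i) *
     ((\<Sum>j=1..d. ind p (0, k, i, j) * x j) + ind p (0, k, i, 0))"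
| "dl w p x (Suc (Suc l)) k i = deriv \<sigma> (pre w x (Suc (Suc l)) k i) *
     ((\<Sum>j=1..r. ind p (Suc l, k, i, j) * lay w x (Suc l) k j + w (Suc l, k, i, j) * dl w p x (Suc l) k j)
      + ind p (Suc l, k, i, 0))"

lemma lay_deriv:
  "\<forall>k i. ((\<lambda>t. lay (w(p:=t)) x m k i) has_real_derivative dl w p x m k i) (at (w p))"
proof (induction m rule: nat_induct012)
  case 1
  then show ?case by simp
next
  case 2
  show ?case
  proof (intro allI)
    fix k i
    have "((\<lambda>t. pre (w(p:=t)) x (Suc 0) k i) has_real_derivative
           (\<Sum>j=1..d. ind p (0, k, i, j) * x j) + ind p (0, k, i, 0)) (at (w p))"
      unfolding pre.simps
      apply (rule DERIV_cong)
       apply (rule DERIV_add)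
        apply (rule DERIV_sum)
        apply (rule DERIV_mult)
         apply (rule upd_deriv)
        apply (rule DERIV_const)
       apply (rule upd_deriv)
      apply simp
      done
    from DERIV_chain'[OF this sdiff]
    show "((\<lambda>t. lay (w(p:=t)) x (Suc 0) k i) has_real_derivative dl w p x (Suc 0) k i) (at (w p))"
      by (simp add: lay_pre mult.commute del: nn_layer.simps)
  qed
next
  case (3 l)
  show ?case
  proof (intro allI)
    fix k i
    have "((\<lambda>t. pre (w(p:=t)) x (Suc (Suc l)) k i) has_real_derivative
           (\<Sum>j=1..r. ind p (Suc l, k, i, j) * lay w x (Suc l) k j + w (Suc l, k, i, j) * dl w p x (Suc l) k j)
      + ind p (Suc l, k, i, 0)) (at (w p))"
      unfolding pre.simps
      apply (rule DERIV_cong)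
       apply (rule DERIV_add)
        apply (rule DERIV_sum)
        apply (rule DERIV_mult)
         apply (rule upd_deriv)
        apply (rule 3[rule_format])
       apply (rule upd_deriv)
      apply (simp add: mult.commute)
      done
    from DERIV_chain'[OF this sdiff]
    show "((\<lambda>t. lay (w(p:=t)) x (Suc (Suc l)) k i) has_real_derivative dl w p x (Suc (Suc l)) k i) (at (w p))"
      by (simp add: lay_pre mult.commute del: nn_layer.simps)
  qed
qed

end

lemma mono_BA:
  fixes B \<alpha> \<delta> :: real
  assumes "B \<ge> 1" "\<alpha> \<ge> 1" "\<delta> \<ge> 0" "n \<le> N" "a \<le> A"
  shows "B^n * \<alpha>^a * \<delta> \<le> B^N * \<alpha>^A * \<delta>"
proof -
  have "B^n \<le> B^N" using assms by (intro power_increasing) auto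
  moreover have "\<alpha>^a \<le> \<alpha>^A" using assms by (intro power_increasing) auto
  ultimately have "B^n * \<alpha>^a \<le> B^N * \<alpha>^A" using assms by (intro mult_mono) auto
  then show ?thesis using assms(3) by (intro mult_right_mono)
qed

context nnl
begin

lemma S1_bound:
  assumes B: "B \<ge> 1" and a: "\<alpha> \<ge> 1" and X: "Xb \<alpha> x"
  shows "\<bar>(\<Sum>j=1..d. ind p (0, k, i, j) * x j) + ind p (0, k, i, 0)\<bar> \<le> (real d + 1) * B^Suc 0 * \<alpha>"
proof -
    have "\<bar>(\<Sum>j=1..d. ind p (0, k, i, j) * x j) + ind p (0, k, i, 0)\<bar>
        \<le> (\<Sum>j=1..d. \<bar>ind p (0, k, i, j) * x j\<bar>) + \<bar>ind p (0, k, i, 0)\<bar>"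
      by (rule order_trans[OF abs_triangle_ineq add_right_mono[OF sum_abs]])
    also have "\<dots> \<le> (\<Sum>j=1..d. 1 * \<alpha>) + 1"
    proof (intro add_mono sum_mono abs_mult_le ind_abs)
      fix j assume "j \<in> {1..d}" then show "\<bar>x j\<bar> \<le> \<alpha>" using X unfolding Xb_def by auto
    qed
    also have "\<dots> = real d * \<alpha> + 1" by simp
    also have "\<dots> \<le> (real d + 1) * B^Suc 0 * \<alpha>"
    proof -
      have "real d * \<alpha> * 1 \<le> real d * \<alpha> * B" using B a by (intro mult_left_mono) auto
      moreover have "1 \<le> B * \<alpha>" using one_le_pow_mult[OF B a, of 1] by simp
      ultimately show ?thesis by (simp add: algebra_simps)
    qed
    finally show ?thesis .
qed

lemma S2_bound:
  assumes B: "B \<ge> 1" and a: "\<alpha> \<ge> 1" and Bw: "Bd B k w" and i: "i \<in> {1..r}" and m: "Suc (Suc l) \<le> L"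
    and IH: "\<And>j. j \<in> {1..r} \<Longrightarrow> \<bar>dl w p x (Suc l) k j\<bar> \<le> C * B^(Suc l) * \<alpha>"
  shows "\<bar>(\<Sum>j=1..r. ind p (Suc l, k, i, j) * lay w x (Suc l) k j + w (Suc l, k, i, j) * dl w p x (Suc l) k j)
      + ind p (Suc l, k, i, 0)\<bar> \<le> (real r * (M + C) + 1) * (B^Suc (Suc l) * \<alpha>)"
proof -
    let ?P = "B^Suc (Suc l) * \<alpha>"
    have bw: "\<bar>w (Suc l, k, i, j)\<bar> \<le> B" if "j \<in> {0..r}" for j
      using Bw that i m unfolding Bd_def by auto
    have tm: "\<bar>ind p (Suc l, k, i, j) * lay w x (Suc l) k j + w (Suc l, k, i, j) * dl w p x (Suc l) k j\<bar>
       \<le> (M + C) * ?P" if j: "j \<in> {1..r}" for j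
    proof -
      have "\<bar>ind p (Suc l, k, i, j) * lay w x (Suc l) k j + w (Suc l, k, i, j) * dl w p x (Suc l) k j\<bar>
         \<le> \<bar>ind p (Suc l, k, i, j) * lay w x (Suc l) k j\<bar> + \<bar>w (Suc l, k, i, j) * dl w p x (Suc l) k j\<bar>"
        by (rule abs_triangle_ineq)
      also have "\<dots> \<le> 1 * M + B * (C * B^(Suc l) * \<alpha>)"
        by (intro add_mono abs_mult_le ind_abs lay_bound bw IH) (use j in auto)
      also have "\<dots> \<le> M * ?P + C * ?P"
      proof -
        have "B * (C * B^(Suc l) * \<alpha>) = C * ?P" by (simp add: algebra_simps)
        moreover have "M * 1 \<le> M * ?P"
          using one_le_pow_mult[OF B a, of "Suc (Suc l)"] M1 by (intro mult_left_mono) auto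
        ultimately show ?thesis by linarith
      qed
      finally show ?thesis by (simp add: algebra_simps)
    qed
    have "\<bar>(\<Sum>j=1..r. ind p (Suc l, k, i, j) * lay w x (Suc l) k j + w (Suc l, k, i, j) * dl w p x (Suc l) k j)
      + ind p (Suc l, k, i, 0)\<bar>
      \<le> (\<Sum>j=1..r. \<bar>ind p (Suc l, k, i, j) * lay w x (Suc l) k j + w (Suc l, k, i, j) * dl w p x (Suc l) k j\<bar>)
      + \<bar>ind p (Suc l, k, i, 0)\<bar>"
      by (rule order_trans[OF abs_triangle_ineq add_right_mono[OF sum_abs]])
    also have "\<dots> \<le> (\<Sum>j=1..r. (M + C) * ?P) + ?P"
      using one_le_pow_mult[OF B a, of "Suc (Suc l)"]
      by (intro add_mono sum_mono tm order_trans[OF ind_abs(1)]) auto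
    also have "\<dots> = (real r * (M + C) + 1) * ?P" by (simp add: algebra_simps)
    finally show ?thesis .
qed

lemma dl_bound:
  "\<exists>C\<ge>0. \<forall>B \<alpha> w x k i (p::nat \<times> nat \<times> nat \<times> nat). B \<ge> 1 \<longrightarrow> \<alpha> \<ge> 1 \<longrightarrow> Bd B k w \<longrightarrow> Xb \<alpha> x \<longrightarrow> i \<in> {1..r} \<longrightarrow> m \<le> L \<longrightarrow>
     \<bar>dl w p x m k i\<bar> \<le> C * B^m * \<alpha>"
proof (induction m rule: nat_induct012)
  case 1
  show ?case by (intro exI[of _ 0]) simp
next
  case 2
  show ?case
  proof (intro exI[of _ "D * (real d + 1)"] conjI allI impI)
    fix B \<alpha> w x k i and p :: "nat \<times> nat \<times> nat \<times> nat"
    assume B: "B \<ge> 1" and a: "\<alpha> \<ge> 1" and Bw: "Bd B k w" and X: "Xb \<alpha> x"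
      and i: "i \<in> {1..r}" and m: "Suc 0 \<le> L"
    note S = S1_bound[OF B a X, of p k i]
    have "\<bar>dl w p x (Suc 0) k i\<bar> \<le> D * ((real d + 1) * B^Suc 0 * \<alpha>)"
      unfolding dl.simps by (rule abs_mult_le[OF sD S])
    then show "\<bar>dl w p x (Suc 0) k i\<bar> \<le> D * (real d + 1) * B ^ Suc 0 * \<alpha>" by (simp add: mult.assoc)
  qed (use D1 in simp)
next
  case (3 l)
  then obtain C where C0: "C \<ge> 0" and IH: "\<And>B \<alpha> w x k i (p::nat \<times> nat \<times> nat \<times> nat). B \<ge> 1 \<Longrightarrow> \<alpha> \<ge> 1 \<Longrightarrow> Bd B k w \<Longrightarrow> Xb \<alpha> x
     \<Longrightarrow> i \<in> {1..r} \<Longrightarrow> Suc l \<le> L \<Longrightarrow> \<bar>dl w p x (Suc l) k i\<bar> \<le> C * B^(Suc l) * \<alpha>"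
    by blast
  show ?case
  proof (intro exI[of _ "D * (real r * (M + C) + 1)"] conjI allI impI)
    fix B \<alpha> w x k i and p :: "nat \<times> nat \<times> nat \<times> nat"
    assume B: "B \<ge> 1" and a: "\<alpha> \<ge> 1" and Bw: "Bd B k w" and X: "Xb \<alpha> x"
      and i: "i \<in> {1..r}" and m: "Suc (Suc l) \<le> L"
    let ?P = "B^Suc (Suc l) * \<alpha>"
    have S: "\<bar>(\<Sum>j=1..r. ind p (Suc l, k, i, j) * lay w x (Suc l) k j + w (Suc l, k, i, j) * dl w p x (Suc l) k j)
      + ind p (Suc l, k, i, 0)\<bar> \<le> (real r * (M + C) + 1) * ?P"
      by (rule S2_bound[OF B a Bw i m]) (use IH[OF B a Bw X] m in auto)
    have "\<bar>dl w p x (Suc (Suc l)) k i\<bar> \<le> D * ((real r * (M + C) + 1) * ?P)"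
      unfolding dl.simps by (rule abs_mult_le[OF sD S])
    then show "\<bar>dl w p x (Suc (Suc l)) k i\<bar> \<le> D * (real r * (M + C) + 1) * B ^ Suc (Suc l) * \<alpha>"
      by (simp add: mult.assoc)
  qed (use D1 M1 C0 in simp)
qed


lemma lay_lip:
  "\<exists>C\<ge>0. \<forall>B \<alpha> \<delta> w1 w2 x k i. B \<ge> 1 \<longrightarrow> \<alpha> \<ge> 1 \<longrightarrow> \<delta> \<ge> 0 \<longrightarrow> Bd B k w1 \<longrightarrow> Bd B k w2
     \<longrightarrow> Dlt k \<delta> w1 w2 \<longrightarrow> Xb \<alpha> x \<longrightarrow> i \<in> {1..r} \<longrightarrow> m \<le> L \<longrightarrow>
     \<bar>lay w1 x m k i - lay w2 x m k i\<bar> \<le> C * B^m * \<alpha> * \<delta>"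
proof (cases m)
  case 0
  then show ?thesis by (intro exI[of _ 0]) simp
next
  case (Suc m')
  obtain C where C0: "C \<ge> 0" and H: "\<forall>B \<alpha> \<delta> w1 w2 x k i. B \<ge> 1 \<longrightarrow> \<alpha> \<ge> 1 \<longrightarrow> \<delta> \<ge> 0 \<longrightarrow> Bd B k w1 \<longrightarrow> Bd B k w2
     \<longrightarrow> Dlt k \<delta> w1 w2 \<longrightarrow> Xb \<alpha> x \<longrightarrow> i \<in> {1..r} \<longrightarrow> m \<le> L \<longrightarrow>
     \<bar>pre w1 x m k i - pre w2 x m k i\<bar> \<le> C * B^m * \<alpha> * \<delta>"
    using pre_lip[of m] by blast
  show ?thesis
  proof (intro exI[of _ "D * C"] conjI allI impI)
    fix B \<alpha> \<delta> w1 w2 x k i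
    assume h: "B \<ge> 1" "\<alpha> \<ge> 1" "\<delta> \<ge> 0" "Bd B k w1" "Bd B k w2" "Dlt k \<delta> w1 w2" "Xb \<alpha> x" "i \<in> {1..r}" "m \<le> L"
    have "\<bar>lay w1 x m k i - lay w2 x m k i\<bar> \<le> D * \<bar>pre w1 x m k i - pre w2 x m k i\<bar>"
      using sigma_lip Suc by (simp add: lay_pre del: nn_layer.simps)
    also have "\<dots> \<le> D * (C * B^m * \<alpha> * \<delta>)"
      using H h D1 by (intro mult_left_mono) auto
    finally show "\<bar>lay w1 x m k i - lay w2 x m k i\<bar> \<le> D * C * B^m * \<alpha> * \<delta>" by (simp add: mult.assoc)
  qed (use C0 D1 in simp)
qed

lemma dl_lip:
  "\<exists>C\<ge>0. \<forall>B \<alpha> \<delta> w1 w2 x k i (p::nat \<times> nat \<times> nat \<times> nat). B \<ge> 1 \<longrightarrow> \<alpha> \<ge> 1 \<longrightarrow> \<delta> \<ge> 0 \<longrightarrow> Bd B k w1 \<longrightarrow> Bd B k w2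
     \<longrightarrow> Dlt k \<delta> w1 w2 \<longrightarrow> Xb \<alpha> x \<longrightarrow> i \<in> {1..r} \<longrightarrow> m \<le> L \<longrightarrow>
     \<bar>dl w1 p x m k i - dl w2 p x m k i\<bar> \<le> C * (B^(2*m) * \<alpha>^2 * \<delta>)"
proof (induction m rule: nat_induct012)
  case 1
  show ?case by (intro exI[of _ 0]) simp
next
  case 2
  obtain Cp where Cp0: "Cp \<ge> 0" and Hp: "\<forall>B \<alpha> \<delta> w1 w2 x k i. B \<ge> 1 \<longrightarrow> \<alpha> \<ge> 1 \<longrightarrow> \<delta> \<ge> 0 \<longrightarrow> Bd B k w1 \<longrightarrow> Bd B k w2
     \<longrightarrow> Dlt k \<delta> w1 w2 \<longrightarrow> Xb \<alpha> x \<longrightarrow> i \<in> {1..r} \<longrightarrow> Suc 0 \<le> L \<longrightarrow>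
     \<bar>pre w1 x (Suc 0) k i - pre w2 x (Suc 0) k i\<bar> \<le> Cp * B^(Suc 0) * \<alpha> * \<delta>"
    using pre_lip[of "Suc 0"] by blast
  show ?case
  proof (intro exI[of _ "Lc * Cp * (real d + 1)"] conjI allI impI)
    fix B \<alpha> \<delta> w1 w2 x k i and p :: "nat \<times> nat \<times> nat \<times> nat"
    assume h: "B \<ge> 1" "\<alpha> \<ge> 1" "\<delta> \<ge> 0" "Bd B k w1" "Bd B k w2" "Dlt k \<delta> w1 w2" "Xb \<alpha> x" "i \<in> {1..r}" "Suc 0 \<le> L"
    note S = S1_bound[OF h(1,2,7), of p k i]
    have da: "\<bar>deriv \<sigma> (pre w1 x (Suc 0) k i) - deriv \<sigma> (pre w2 x (Suc 0) k i)\<bar> \<le> Lc * (Cp * B^(Suc 0) * \<alpha> * \<delta>)"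
      by (rule order_trans[OF sL mult_left_mono]) (use Hp h Lc0 in auto)
    have "\<bar>dl w1 p x (Suc 0) k i - dl w2 p x (Suc 0) k i\<bar>
       = \<bar>(deriv \<sigma> (pre w1 x (Suc 0) k i) - deriv \<sigma> (pre w2 x (Suc 0) k i)) *
          ((\<Sum>j=1..d. ind p (0, k, i, j) * x j) + ind p (0, k, i, 0))\<bar>"
      by (simp only: dl.simps left_diff_distrib)
    also have "\<dots> \<le> (Lc * (Cp * B^(Suc 0) * \<alpha> * \<delta>)) * ((real d + 1) * B^Suc 0 * \<alpha>)"
      by (rule abs_mult_le[OF da S])
    also have "\<dots> = Lc * Cp * (real d + 1) * (B^(2 * Suc 0) * \<alpha>^2 * \<delta>)"
      by (simp add: power2_eq_square algebra_simps)
    finally show "\<bar>dl w1 p x (Suc 0) k i - dl w2 p x (Suc 0) k i\<bar> \<le> Lc * Cp * (real d + 1) * (B^(2 * Suc 0) * \<alpha>^2 * \<delta>)" .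
  qed (use Lc0 Cp0 in simp)
next
  case (3 l)
  then obtain C where C0: "C \<ge> 0" and IH: "\<And>B \<alpha> \<delta> w1 w2 x k i (p::nat \<times> nat \<times> nat \<times> nat). B \<ge> 1 \<Longrightarrow> \<alpha> \<ge> 1 \<Longrightarrow> \<delta> \<ge> 0 \<Longrightarrow> Bd B k w1 \<Longrightarrow> Bd B k w2
     \<Longrightarrow> Dlt k \<delta> w1 w2 \<Longrightarrow> Xb \<alpha> x \<Longrightarrow> i \<in> {1..r} \<Longrightarrow> Suc l \<le> L \<Longrightarrow>
     \<bar>dl w1 p x (Suc l) k i - dl w2 p x (Suc l) k i\<bar> \<le> C * (B^(2 * Suc l) * \<alpha>^2 * \<delta>)"
    by blast
  obtain Cp where Cp0: "Cp \<ge> 0" and Hp: "\<forall>B \<alpha> \<delta> w1 w2 x k i. B \<ge> 1 \<longrightarrow> \<alpha> \<ge> 1 \<longrightarrow> \<delta> \<ge> 0 \<longrightarrow> Bd B k w1 \<longrightarrow> Bd B k w2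
     \<longrightarrow> Dlt k \<delta> w1 w2 \<longrightarrow> Xb \<alpha> x \<longrightarrow> i \<in> {1..r} \<longrightarrow> Suc (Suc l) \<le> L \<longrightarrow>
     \<bar>pre w1 x (Suc (Suc l)) k i - pre w2 x (Suc (Suc l)) k i\<bar> \<le> Cp * B^(Suc (Suc l)) * \<alpha> * \<delta>"
    using pre_lip[of "Suc (Suc l)"] by blast
  obtain Cl where Cl0: "Cl \<ge> 0" and Hl: "\<forall>B \<alpha> \<delta> w1 w2 x k i. B \<ge> 1 \<longrightarrow> \<alpha> \<ge> 1 \<longrightarrow> \<delta> \<ge> 0 \<longrightarrow> Bd B k w1 \<longrightarrow> Bd B k w2
     \<longrightarrow> Dlt k \<delta> w1 w2 \<longrightarrow> Xb \<alpha> x \<longrightarrow> i \<in> {1..r} \<longrightarrow> Suc l \<le> L \<longrightarrow>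
     \<bar>lay w1 x (Suc l) k i - lay w2 x (Suc l) k i\<bar> \<le> Cl * B^(Suc l) * \<alpha> * \<delta>"
    using lay_lip[of "Suc l"] by blast
  obtain Cb where Cb0: "Cb \<ge> 0" and Hb: "\<forall>B \<alpha> w x k i (p::nat \<times> nat \<times> nat \<times> nat). B \<ge> 1 \<longrightarrow> \<alpha> \<ge> 1 \<longrightarrow> Bd B k w \<longrightarrow> Xb \<alpha> x \<longrightarrow> i \<in> {1..r} \<longrightarrow> Suc l \<le> L \<longrightarrow>
     \<bar>dl w p x (Suc l) k i\<bar> \<le> Cb * B^(Suc l) * \<alpha>"
    using dl_bound[of "Suc l"] by blast
  let ?Cs = "real r * (M + Cb) + 1"
  show ?case
  proof (intro exI[of _ "Lc * Cp * ?Cs + D * (real r * (Cl + Cb + C))"] conjI allI impI)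
    fix B \<alpha> \<delta> w1 w2 x k i and p :: "nat \<times> nat \<times> nat \<times> nat"
    assume h: "B \<ge> 1" "\<alpha> \<ge> 1" "\<delta> \<ge> 0" "Bd B k w1" "Bd B k w2" "Dlt k \<delta> w1 w2" "Xb \<alpha> x" "i \<in> {1..r}" "Suc (Suc l) \<le> L"
    let ?P = "B^(2 * Suc (Suc l)) * \<alpha>^2 * \<delta>"
    define S where "S w = (\<Sum>j=1..r. ind p (Suc l, k, i, j) * lay w x (Suc l) k j + w (Suc l, k, i, j) * dl w p x (Suc l) k j)
      + ind p (Suc l, k, i, 0)" for w
    have Hb1: "\<bar>dl w1 p x (Suc l) k j\<bar> \<le> Cb * B^(Suc l) * \<alpha>" if "j \<in> {1..r}" for j
      using h(9) Hb[rule_format, OF h(1,2,4,7) that] by simp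
    have S1: "\<bar>S w1\<bar> \<le> ?Cs * (B^Suc (Suc l) * \<alpha>)"
      unfolding S_def by (rule S2_bound[OF h(1,2,4,8,9) Hb1])
    have da: "\<bar>deriv \<sigma> (pre w1 x (Suc (Suc l)) k i) - deriv \<sigma> (pre w2 x (Suc (Suc l)) k i)\<bar>
        \<le> Lc * (Cp * B^(Suc (Suc l)) * \<alpha> * \<delta>)"
      by (rule order_trans[OF sL mult_left_mono]) (use Hp h Lc0 in auto)
    have T1: "\<bar>(deriv \<sigma> (pre w1 x (Suc (Suc l)) k i) - deriv \<sigma> (pre w2 x (Suc (Suc l)) k i)) * S w1\<bar>
        \<le> Lc * Cp * ?Cs * ?P"
    proof -
      have "\<bar>(deriv \<sigma> (pre w1 x (Suc (Suc l)) k i) - deriv \<sigma> (pre w2 x (Suc (Suc l)) k i)) * S w1\<bar>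
         \<le> (Lc * (Cp * B^(Suc (Suc l)) * \<alpha> * \<delta>)) * (?Cs * (B^Suc (Suc l) * \<alpha>))"
        by (rule abs_mult_le[OF da S1])
      also have "\<dots> = Lc * Cp * ?Cs * ?P"
      proof -
        have e: "B^(2 * Suc (Suc l)) = B^Suc (Suc l) * B^Suc (Suc l)" by (simp only: mult_2 power_add)
        show ?thesis unfolding e by (simp add: power2_eq_square algebra_simps)
      qed
      finally show ?thesis .
    qed
    have dw: "\<bar>w1 (Suc l, k, i, j) - w2 (Suc l, k, i, j)\<bar> \<le> \<delta>" if "j \<in> {0..r}" for j
      using h(6) that h(8,9) unfolding Dlt_def S0_def by auto
    have bw: "\<bar>w2 (Suc l, k, i, j)\<bar> \<le> B" if "j \<in> {0..r}" for j
      using h(5) that h(8,9) unfolding Bd_def by auto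
    have m1: "B^(Suc l) * \<alpha>^1 * \<delta> \<le> ?P"
      by (rule mono_BA) (use h in auto)
    have m2: "B^(Suc (2 * Suc l)) * \<alpha>^2 * \<delta> \<le> ?P"
      by (rule mono_BA) (use h in auto)
    have tmj: "\<bar>(ind p (Suc l, k, i, j) * lay w1 x (Suc l) k j + w1 (Suc l, k, i, j) * dl w1 p x (Suc l) k j)
        - (ind p (Suc l, k, i, j) * lay w2 x (Suc l) k j + w2 (Suc l, k, i, j) * dl w2 p x (Suc l) k j)\<bar>
        \<le> (Cl + Cb + C) * ?P" if j: "j \<in> {1..r}" for j
    proof -
      have "\<bar>(ind p (Suc l, k, i, j) * lay w1 x (Suc l) k j + w1 (Suc l, k, i, j) * dl w1 p x (Suc l) k j)
        - (ind p (Suc l, k, i, j) * lay w2 x (Suc l) k j + w2 (Suc l, k, i, j) * dl w2 p x (Suc l) k j)\<bar>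
        = \<bar>ind p (Suc l, k, i, j) * (lay w1 x (Suc l) k j - lay w2 x (Suc l) k j)
           + ((w1 (Suc l, k, i, j) - w2 (Suc l, k, i, j)) * dl w1 p x (Suc l) k j
           + w2 (Suc l, k, i, j) * (dl w1 p x (Suc l) k j - dl w2 p x (Suc l) k j))\<bar>"
        by (simp add: algebra_simps)
      also have "\<dots> \<le> \<bar>ind p (Suc l, k, i, j) * (lay w1 x (Suc l) k j - lay w2 x (Suc l) k j)\<bar>
           + (\<bar>(w1 (Suc l, k, i, j) - w2 (Suc l, k, i, j)) * dl w1 p x (Suc l) k j\<bar>
           + \<bar>w2 (Suc l, k, i, j) * (dl w1 p x (Suc l) k j - dl w2 p x (Suc l) k j)\<bar>)"
        by (rule order_trans[OF abs_triangle_ineq add_left_mono[OF abs_triangle_ineq]])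
      also have "\<dots> \<le> 1 * (Cl * B^(Suc l) * \<alpha> * \<delta>) + (\<delta> * (Cb * B^(Suc l) * \<alpha>)
           + B * (C * (B^(2 * Suc l) * \<alpha>^2 * \<delta>)))"
        apply (intro add_mono abs_mult_le ind_abs)
        using Hl h j apply simp
        using dw j apply simp
        using Hb1 j apply simp
        using bw j apply simp
        using IH[OF h(1-7) j] h(9) apply simp
        done
      also have "\<dots> = Cl * (B^(Suc l) * \<alpha>^1 * \<delta>) + Cb * (B^(Suc l) * \<alpha>^1 * \<delta>)
           + C * (B^(Suc (2 * Suc l)) * \<alpha>^2 * \<delta>)"
        by (simp add: algebra_simps)
      also have "\<dots> \<le> Cl * ?P + Cb * ?P + C * ?P"
        by (intro add_mono mult_left_mono m1 m2 Cl0 Cb0 C0)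
      finally show ?thesis by (simp add: algebra_simps)
    qed
    have "\<bar>S w1 - S w2\<bar> = \<bar>(\<Sum>j=1..r. (ind p (Suc l, k, i, j) * lay w1 x (Suc l) k j + w1 (Suc l, k, i, j) * dl w1 p x (Suc l) k j)
        - (ind p (Suc l, k, i, j) * lay w2 x (Suc l) k j + w2 (Suc l, k, i, j) * dl w2 p x (Suc l) k j))\<bar>"
      unfolding S_def by (simp add: sum_subtractf)
    also have "\<dots> \<le> (\<Sum>j=1..r. (Cl + Cb + C) * ?P)"
      by (rule order_trans[OF sum_abs sum_mono[OF tmj]])
    also have "\<dots> = real r * (Cl + Cb + C) * ?P" by simp
    finally have dS: "\<bar>S w1 - S w2\<bar> \<le> real r * (Cl + Cb + C) * ?P" .
    have T2: "\<bar>deriv \<sigma> (pre w2 x (Suc (Suc l)) k i) * (S w1 - S w2)\<bar> \<le> D * (real r * (Cl + Cb + C) * ?P)"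
      by (rule abs_mult_le[OF sD dS])
    have e1: "dl w p x (Suc (Suc l)) k i = deriv \<sigma> (pre w x (Suc (Suc l)) k i) * S w" for w
      unfolding S_def by (simp only: dl.simps)
    have ring: "a * s - b * t = (a - b) * s + b * (s - t)" for a b s t :: real by algebra
    have "\<bar>dl w1 p x (Suc (Suc l)) k i - dl w2 p x (Suc (Suc l)) k i\<bar>
       = \<bar>(deriv \<sigma> (pre w1 x (Suc (Suc l)) k i) - deriv \<sigma> (pre w2 x (Suc (Suc l)) k i)) * S w1
         + deriv \<sigma> (pre w2 x (Suc (Suc l)) k i) * (S w1 - S w2)\<bar>"
      unfolding e1 ring ..
    also have "\<dots> \<le> \<bar>(deriv \<sigma> (pre w1 x (Suc (Suc l)) k i) - deriv \<sigma> (pre w2 x (Suc (Suc l)) k i)) * S w1\<bar>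
         + \<bar>deriv \<sigma> (pre w2 x (Suc (Suc l)) k i) * (S w1 - S w2)\<bar>"
      by (rule abs_triangle_ineq)
    finally have "\<bar>dl w1 p x (Suc (Suc l)) k i - dl w2 p x (Suc (Suc l)) k i\<bar>
       \<le> Lc * Cp * ?Cs * ?P + D * (real r * (Cl + Cb + C) * ?P)"
      using T1 T2 by linarith
    then show "\<bar>dl w1 p x (Suc (Suc l)) k i - dl w2 p x (Suc (Suc l)) k i\<bar>
       \<le> (Lc * Cp * ?Cs + D * (real r * (Cl + Cb + C))) * ?P"
      by (simp add: algebra_simps)
  qed (use Lc0 Cp0 Cb0 M1 D1 Cl0 C0 in simp)
qed

end

context nnl
begin

lemma dl_zero_layer: "\<forall>k i. m \<le> fst p \<longrightarrow> dl w p x m k i = 0"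
proof (induction m rule: nat_induct012)
  case 1
  then show ?case by simp
next
  case 2
  show ?case
  proof (intro allI impI)
    fix k i assume "Suc 0 \<le> fst p"
    then have "ind p (0, k, i, j) = 0" for j by (auto simp: ind_def)
    then show "dl w p x (Suc 0) k i = 0" by simp
  qed
next
  case (3 l)
  show ?case
  proof (intro allI impI)
    fix k i assume h: "Suc (Suc l) \<le> fst p"
    then have "ind p (Suc l, k, i, j) = 0" for j by (auto simp: ind_def)
    moreover have "dl w p x (Suc l) k j = 0" for j using 3 h by simp
    ultimately show "dl w p x (Suc (Suc l)) k i = 0" by simp
  qed
qed

lemma dl_zero_k: "\<forall>i. fst (snd p) \<noteq> k \<longrightarrow> dl w p x m k i = 0"
proof (induction m rule: nat_induct012)
  case 1
  then show ?case by simp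
next
  case 2
  show ?case
  proof (intro allI impI)
    fix i assume "fst (snd p) \<noteq> k"
    then have "ind p (0, k, i, j) = 0" for j by (auto simp: ind_def)
    then show "dl w p x (Suc 0) k i = 0" by simp
  qed
next
  case (3 l)
  show ?case
  proof (intro allI impI)
    fix i assume h: "fst (snd p) \<noteq> k"
    then have "ind p (Suc l, k, i, j) = 0" for j by (auto simp: ind_def)
    moreover have "dl w p x (Suc l) k j = 0" for j using 3 h by simp
    ultimately show "dl w p x (Suc (Suc l)) k i = 0" by simp
  qed
qed

definition df :: "nat \<Rightarrow> weights \<Rightarrow> nat \<times> nat \<times> nat \<times> nat \<Rightarrow> (nat \<Rightarrow> real) \<Rightarrow> real" where
  "df K w p x = (\<Sum>j=1..K. ind p (L, 1, 1, j) * lay w x L j 1 + w (L, 1, 1, j) * dl w p x L j 1)"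

lemma nf_deriv:
  "((\<lambda>t. nn_f \<sigma> d r L K (w(p:=t)) x) has_real_derivative df K w p x) (at (w p))"
  unfolding nn_f_def df_def
  apply (rule DERIV_cong)
   apply (rule DERIV_sum)
   apply (rule DERIV_mult)
    apply (rule upd_deriv)
   apply (rule lay_deriv[rule_format])
  apply (simp add: mult.commute)
  done

definition dF :: "nat \<Rightarrow> real \<Rightarrow> nat \<Rightarrow> (nat \<Rightarrow> nat \<Rightarrow> real) \<Rightarrow> (nat \<Rightarrow> real) \<Rightarrow> real \<Rightarrow> weights
   \<Rightarrow> nat \<times> nat \<times> nat \<times> nat \<Rightarrow> real" where
  "dF K c2 n X Y \<alpha> w p = (1 / real n) * (\<Sum>i=1..n. (2 * (nn_f \<sigma> d r L K w (X i) - Y i) * df K w p (X i)) *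
         (if (\<forall>j\<in>{1..d}. \<bar>X i j\<bar> \<le> \<alpha>) then 1 else 0))
     + c2 * (\<Sum>j=1..K. 2 * w (L, 1, 1, j) * ind p (L, 1, 1, j))"

lemma Fn_deriv:
  "((\<lambda>t. Fn \<sigma> d r L K c2 n X Y \<alpha> (w(p:=t))) has_real_derivative dF K c2 n X Y \<alpha> w p) (at (w p))"
  unfolding Fn_def dF_def power2_abs unfolding power2_eq_square
  apply (rule DERIV_cong)
   apply (rule DERIV_add)
    apply (rule DERIV_cmult)
    apply (rule DERIV_sum)
    apply (rule DERIV_cmult_right)
    apply (rule DERIV_mult)
     apply (rule DERIV_diff)
      apply (rule nf_deriv)
     apply (rule DERIV_const)
    apply (rule DERIV_diff)
     apply (rule nf_deriv)
    apply (rule DERIV_const)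
   apply (rule DERIV_cmult)
   apply (rule DERIV_sum)
   apply (rule DERIV_mult)
    apply (rule upd_deriv)
   apply (rule upd_deriv)
  apply (simp add: algebra_simps)
  done

lemma wpartial_Fn: "wpartial (Fn \<sigma> d r L K c2 n X Y \<alpha>) w p = dF K c2 n X Y \<alpha> w p"
  unfolding wpartial_def by (rule DERIV_imp_deriv[OF Fn_deriv])

lemma df_out:
  assumes "j0 \<in> {1..K}"
  shows "df K w (L, 1, 1, j0) x = lay w x L j0 1"
proof -
  have "df K w (L, 1, 1, j0) x = (\<Sum>j=1..K. if j = j0 then lay w x L j 1 else 0)"
    unfolding df_def
    using dl_zero_layer[of L "(L, 1, 1, j0)" w x]
    by (intro sum.cong) (auto simp: ind_def)
  also have "\<dots> = lay w x L j0 1" using assms by (simp add: sum.delta')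
  finally show ?thesis .
qed

lemma df_in:
  assumes "k0 \<in> {1..K}" "l < L"
  shows "df K w (l, k0, i, j) x = w (L, 1, 1, k0) * dl w (l, k0, i, j) x L k0 1"
proof -
  have "df K w (l, k0, i, j) x = (\<Sum>k=1..K. if k = k0 then w (L, 1, 1, k0) * dl w (l, k0, i, j) x L k0 1 else 0)"
    unfolding df_def
    using dl_zero_k[of "(l, k0, i, j)" _ w x L] assms(2)
    by (intro sum.cong) (auto simp: ind_def)
  also have "\<dots> = w (L, 1, 1, k0) * dl w (l, k0, i, j) x L k0 1" using assms by (simp add: sum.delta')
  finally show ?thesis .
qed

end

lemma wnorm_L2: "wnorm I u = L2_set u I"
  by (simp add: wnorm_def L2_set_def)

lemma L2_set_abs: "L2_set (\<lambda>x. \<bar>f x\<bar>) A = L2_set f A"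
  by (simp add: L2_set_def)

lemma L2_set_cmult: "L2_set (\<lambda>x. c * f x) A = \<bar>c\<bar> * L2_set f A"
proof -
  have "L2_set (\<lambda>x. c * f x) A = L2_set (\<lambda>x. \<bar>c\<bar> * f x) A"
    by (simp add: L2_set_def power_mult_distrib)
  also have "\<dots> = \<bar>c\<bar> * L2_set f A" by (rule L2_set_right_distrib[symmetric]) simp
  finally show ?thesis .
qed

lemma L2_set_mono_abs:
  assumes "\<And>x. x \<in> A \<Longrightarrow> \<bar>f x\<bar> \<le> g x"
  shows "L2_set f A \<le> L2_set g A"
proof -
  have "L2_set (\<lambda>x. \<bar>f x\<bar>) A \<le> L2_set g A"
    by (rule L2_set_mono) (use assms in auto)
  then show ?thesis by (simp add: L2_set_abs)
qed

lemma L2_set_sum_le: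
  assumes "finite S"
  shows "L2_set (\<lambda>x. \<Sum>i\<in>S. f i x) A \<le> (\<Sum>i\<in>S. L2_set (f i) A)"
  using assms
proof (induction S rule: finite_induct)
  case empty
  then show ?case by (simp add: L2_set_def)
next
  case (insert a S)
  have "L2_set (\<lambda>x. \<Sum>i\<in>insert a S. f i x) A = L2_set (\<lambda>x. f a x + (\<Sum>i\<in>S. f i x)) A"
    using insert by simp
  also have "\<dots> \<le> L2_set (f a) A + L2_set (\<lambda>x. \<Sum>i\<in>S. f i x) A"
    by (rule L2_set_triangle_ineq)
  also have "\<dots> \<le> L2_set (f a) A + (\<Sum>i\<in>S. L2_set (f i) A)"
    using insert by simp
  finally show ?case using insert by simp
qed

lemma abs_le_L2_set: "finite A \<Longrightarrow> p \<in> A \<Longrightarrow> \<bar>f p\<bar> \<le> L2_set f A"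
  using member_le_L2_set[of A p "\<lambda>x. \<bar>f x\<bar>"] by (simp add: L2_set_abs)

context nnl
begin

lemma finite_S0: "finite S0" unfolding S0_def by simp

lemma memI: "((l, k, i, j) \<in> (\<lambda>(k, l, i, j). (l, k, i, j)) ` ({1..K} \<times> S0)) \<longleftrightarrow> k \<in> {1..K} \<and> (l, i, j) \<in> S0"
proof
  assume "(l, k, i, j) \<in> (\<lambda>(k, l, i, j). (l, k, i, j)) ` ({1..K} \<times> S0)"
  then obtain k' l' i' j' where "(k', l', i', j') \<in> {1..K} \<times> S0" "(l, k, i, j) = (l', k', i', j')" by auto
  then show "k \<in> {1..K} \<and> (l, i, j) \<in> S0" by auto
next
  assume "k \<in> {1..K} \<and> (l, i, j) \<in> S0"
  then show "(l, k, i, j) \<in> (\<lambda>(k, l, i, j). (l, k, i, j)) ` ({1..K} \<times> S0)"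
    by (intro rev_image_eqI[of "(k, l, i, j)"]) auto
qed

lemma memO: "((l, k, i, j) \<in> (\<lambda>j. (L, 1, 1, j)) ` {1..K}) \<longleftrightarrow> l = L \<and> k = 1 \<and> i = 1 \<and> j \<in> {1..K}"
  by auto

lemma nn_index_decomp:
  "nn_index d r L K = (\<lambda>j. (L, 1, 1, j)) ` {1..K} \<union> (\<lambda>(k, l, i, j). (l, k, i, j)) ` ({1..K} \<times> S0)"
proof (rule set_eqI)
  fix p :: "nat \<times> nat \<times> nat \<times> nat"
  obtain l k i j where p: "p = (l, k, i, j)" by (cases p) auto
  have "p \<in> nn_index d r L K \<longleftrightarrow> (l = L \<and> k = 1 \<and> i = 1 \<and> j \<in> {1..K}) \<or>
     (l \<in> {1..L-1} \<and> k \<in> {1..K} \<and> i \<in> {1..r} \<and> j \<in> {0..r}) \<or> (l = 0 \<and> k \<in> {1..K} \<and> i \<in> {1..r} \<and> j \<in> {0..d})"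
    unfolding p nn_index_def by simp
  also have "\<dots> \<longleftrightarrow> p \<in> (\<lambda>j. (L, 1, 1, j)) ` {1..K} \<union> (\<lambda>(k, l, i, j). (l, k, i, j)) ` ({1..K} \<times> S0)"
    unfolding p Un_iff memO memI unfolding S0_def by (simp only: mem_Sigma_iff Un_iff singleton_iff) blast
  finally show "p \<in> nn_index d r L K \<longleftrightarrow> p \<in> (\<lambda>j. (L, 1, 1, j)) ` {1..K} \<union> (\<lambda>(k, l, i, j). (l, k, i, j)) ` ({1..K} \<times> S0)" .
qed

lemma sum_nn_index:
  "(\<Sum>p\<in>nn_index d r L K. \<phi> p) = (\<Sum>k=1..K. \<phi> (L, 1, 1, k) + (\<Sum>(l, i, j)\<in>S0. \<phi> (l, k, i, j)))"
proof -
  let ?O = "(\<lambda>j. (L, 1, 1, j)) ` {1..K}"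
  let ?I = "(\<lambda>(k, l, i, j). (l, k, i, j)) ` ({1..K} \<times> S0)"
  have disj: "?O \<inter> ?I = {}" using L1 unfolding S0_def by auto
  have fin: "finite ?O" "finite ?I" using finite_S0 by auto
  have inj1: "inj_on (\<lambda>j. (L, 1::nat, 1::nat, j)) {1..K}" by (auto simp: inj_on_def)
  have inj2: "inj_on (\<lambda>(k, l, i, j). (l, k, i, j)) ({1..K} \<times> S0)" by (auto simp: inj_on_def)
  have "(\<Sum>p\<in>nn_index d r L K. \<phi> p) = sum \<phi> ?O + sum \<phi> ?I"
    unfolding nn_index_decomp by (rule sum.union_disjoint[OF fin disj])
  also have "sum \<phi> ?O = (\<Sum>k=1..K. \<phi> (L, 1, 1, k))"
    by (subst sum.reindex[OF inj1]) simp
  also have "sum \<phi> ?I = (\<Sum>(k, q)\<in>{1..K} \<times> S0. \<phi> (case q of (l, i, j) \<Rightarrow> (l, k, i, j)))"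
    by (subst sum.reindex[OF inj2]) (simp add: case_prod_beta)
  also have "\<dots> = (\<Sum>k=1..K. (\<Sum>(l, i, j)\<in>S0. \<phi> (l, k, i, j)))"
    by (subst sum.cartesian_product[symmetric]) (simp add: case_prod_beta)
  finally show ?thesis by (simp add: sum.distrib)
qed

end

locale nnl2 = nnl +
  fixes Cl Cb Cd :: real
  assumes Cl0: "Cl \<ge> 0" and Cb0: "Cb \<ge> 0" and Cd0: "Cd \<ge> 0"
  and Hl: "\<And>B \<alpha> \<delta> w1 w2 x k i. B \<ge> 1 \<Longrightarrow> \<alpha> \<ge> 1 \<Longrightarrow> \<delta> \<ge> 0 \<Longrightarrow> Bd B k w1 \<Longrightarrow> Bd B k w2
     \<Longrightarrow> Dlt k \<delta> w1 w2 \<Longrightarrow> Xb \<alpha> x \<Longrightarrow> i \<in> {1..r} \<Longrightarrow>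
     \<bar>lay w1 x L k i - lay w2 x L k i\<bar> \<le> Cl * B^L * \<alpha> * \<delta>"
  and Hb: "\<And>B \<alpha> w x k i p. B \<ge> 1 \<Longrightarrow> \<alpha> \<ge> 1 \<Longrightarrow> Bd B k w \<Longrightarrow> Xb \<alpha> x \<Longrightarrow> i \<in> {1..r} \<Longrightarrow>
     \<bar>dl w p x L k i\<bar> \<le> Cb * B^L * \<alpha>"
  and Hd: "\<And>B \<alpha> \<delta> w1 w2 x k i p. B \<ge> 1 \<Longrightarrow> \<alpha> \<ge> 1 \<Longrightarrow> \<delta> \<ge> 0 \<Longrightarrow> Bd B k w1 \<Longrightarrow> Bd B k w2
     \<Longrightarrow> Dlt k \<delta> w1 w2 \<Longrightarrow> Xb \<alpha> x \<Longrightarrow> i \<in> {1..r} \<Longrightarrow>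
     \<bar>dl w1 p x L k i - dl w2 p x L k i\<bar> \<le> Cd * (B^(2*L) * \<alpha>^2 * \<delta>)"
begin

definition E :: "nat \<Rightarrow> weights \<Rightarrow> real" where
  "E k u = L2_set (\<lambda>(l, i, j). u (l, k, i, j)) S0"

lemma E_sq: "(E k u)^2 = (\<Sum>(l, i, j)\<in>S0. (u (l, k, i, j))^2)"
  unfolding E_def L2_set_def
  by (simp add: sum_nonneg case_prod_beta)

lemma E_nonneg: "E k u \<ge> 0" unfolding E_def by simp

lemma wnorm_sq: "(wnorm (nn_index d r L K) u)^2 = (\<Sum>k=1..K. (u (L, 1, 1, k))^2 + (E k u)^2)"
proof -
  have "(wnorm (nn_index d r L K) u)^2 = (\<Sum>p\<in>nn_index d r L K. (u p)^2)"
    unfolding wnorm_def by (simp add: sum_nonneg)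
  also have "\<dots> = (\<Sum>k=1..K. (u (L, 1, 1, k))^2 + (E k u)^2)"
    unfolding sum_nn_index E_sq by (simp add: case_prod_beta)
  finally show ?thesis .
qed

lemma Phi_le:
  assumes "k \<in> {1..K}"
  shows "(u (L, 1, 1, k))^2 + (E k u)^2 \<le> (wnorm (nn_index d r L K) u)^2"
  unfolding wnorm_sq
  by (rule member_le_sum[OF assms]) (auto simp: add_nonneg_nonneg)

lemma wnorm_nonneg: "wnorm I u \<ge> 0" unfolding wnorm_def by (simp add: sum_nonneg)

lemma out_le:
  assumes k: "k \<in> {1..K}"
  shows "\<bar>u (L, 1, 1, k)\<bar> \<le> wnorm (nn_index d r L K) u"
proof -
  have "(u (L, 1, 1, k))^2 \<le> (wnorm (nn_index d r L K) u)^2"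
    using Phi_le[OF k, of u] zero_le_power2[of "E k u"] by linarith
  then have "(\<bar>u (L, 1, 1, k)\<bar>)^2 \<le> (wnorm (nn_index d r L K) u)^2" by simp
  then show ?thesis by (rule power2_le_imp_le) (rule wnorm_nonneg)
qed

lemma E_le:
  assumes k: "k \<in> {1..K}"
  shows "E k u \<le> wnorm (nn_index d r L K) u"
proof -
  have "(E k u)^2 \<le> (wnorm (nn_index d r L K) u)^2"
    using Phi_le[OF k, of u] zero_le_power2[of "u (L, 1, 1, k)"] by linarith
  then show ?thesis by (rule power2_le_imp_le) (rule wnorm_nonneg)
qed

lemma Dlt_E: "Dlt k (E k (\<lambda>p. w1 p - w2 p)) w1 w2"
  unfolding Dlt_def E_def
proof (intro allI impI)
  fix l i j assume "(l, i, j) \<in> S0"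
  then show "\<bar>w1 (l, k, i, j) - w2 (l, k, i, j)\<bar> \<le> L2_set (\<lambda>(l, i, j). w1 (l, k, i, j) - w2 (l, k, i, j)) S0"
    using abs_le_L2_set[OF finite_S0, of "(l, i, j)" "\<lambda>(l, i, j). w1 (l, k, i, j) - w2 (l, k, i, j)"] by simp
qed

end

lemma sq_le: "\<bar>a\<bar> \<le> (b::real) \<Longrightarrow> a^2 \<le> b^2"
  using power_mono[of "\<bar>a\<bar>" b 2] by simp

lemma sq_sum_le: "(x + y)^2 \<le> 2 * x^2 + 2 * (y::real)^2"
proof -
  have "(x + y)^2 = 2 * x^2 + 2 * y^2 - (x - y)^2" by (simp add: power2_eq_square algebra_simps)
  moreover have "0 \<le> (x - y)^2" by simp
  ultimately show ?thesis by linarith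
qed

lemma L2_sq: "(L2_set f A)^2 = (\<Sum>x\<in>A. (f x)^2)"
  unfolding L2_set_def by (simp add: sum_nonneg)

context nnl2
begin

definition Wok :: "nat \<Rightarrow> real \<Rightarrow> real \<Rightarrow> weights \<Rightarrow> bool" where
  "Wok K \<gamma> B w \<longleftrightarrow> (\<forall>k\<in>{1..K}. \<bar>w (L, 1, 1, k)\<bar> \<le> \<gamma> \<and> Bd B k w)"

lemma r_ge1: "1 \<in> {1..r}" using r1 by simp

lemma S0_lt: "(l, i, j) \<in> S0 \<Longrightarrow> l < L" using L1 unfolding S0_def by auto

lemma QR:
  fixes B \<alpha> \<gamma> :: real
  assumes "B \<ge> 1" "\<alpha> \<ge> 1" "\<gamma> \<ge> 1"
  shows "B^L * \<alpha> \<le> \<gamma> * B^(2*L) * \<alpha>^2" "1 \<le> \<gamma> * B^L * \<alpha>" "\<gamma> * B^L * \<alpha> \<le> \<gamma> * B^(2*L) * \<alpha>^2"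
    "1 \<le> B^L * \<alpha>"
proof -
  have b1: "B^L \<le> B^(2*L)" by (rule power_increasing) (use assms in auto)
  have b2: "1 \<le> B^L" by (rule one_le_power) (use assms in auto)
  have a: "\<alpha> \<le> \<alpha>^2" using assms by (simp add: power2_eq_square)
  have X: "B^L * \<alpha> \<le> B^(2*L) * \<alpha>^2" using b1 b2 a assms by (intro mult_mono) auto
  have X0: "0 \<le> B^(2*L) * \<alpha>^2" using assms by simp
  have "B^(2*L) * \<alpha>^2 = 1 * (B^(2*L) * \<alpha>^2)" by simp
  also have "\<dots> \<le> \<gamma> * (B^(2*L) * \<alpha>^2)" by (rule mult_right_mono) (use assms X0 in auto)
  finally have Y: "B^(2*L) * \<alpha>^2 \<le> \<gamma> * (B^(2*L) * \<alpha>^2)" .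
  show "B^L * \<alpha> \<le> \<gamma> * B^(2*L) * \<alpha>^2" using X Y by (simp add: mult.assoc)
  show one: "1 \<le> B^L * \<alpha>" by (rule one_le_pow_mult) (use assms in auto)
  have "1 * 1 \<le> \<gamma> * (B^L * \<alpha>)" by (rule mult_mono) (use one assms in auto)
  then show "1 \<le> \<gamma> * B^L * \<alpha>" by (simp add: mult.assoc)
  have "\<gamma> * (B^L * \<alpha>) \<le> \<gamma> * (B^(2*L) * \<alpha>^2)" using X assms by (intro mult_left_mono) auto
  then show "\<gamma> * B^L * \<alpha> \<le> \<gamma> * B^(2*L) * \<alpha>^2" by (simp add: mult.assoc)
qed

end

context nnl2
begin

lemma G1:
  fixes B \<alpha> \<gamma> :: real
  assumes B: "B \<ge> 1" and a: "\<alpha> \<ge> 1" and g: "\<gamma> \<ge> 1" and W1: "Wok K \<gamma> B w1" and W2: "Wok K \<gamma> B w2"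
    and X: "Xb \<alpha> x"
  shows "L2_set (\<lambda>p. df K w1 p x - df K w2 p x) (nn_index d r L K)
     \<le> sqrt (Cl^2 + 2 * real (card S0) * (Cb^2 + Cd^2)) * (\<gamma> * B^(2*L) * \<alpha>^2)
        * wnorm (nn_index d r L K) (\<lambda>p. w1 p - w2 p)"
proof -
  define u where "u = (\<lambda>p. w1 p - w2 p)"
  define Q where "Q = \<gamma> * B^(2*L) * \<alpha>^2"
  define A where "A = Cl^2 + 2 * real (card S0) * (Cb^2 + Cd^2)"
  have A0: "A \<ge> 0" unfolding A_def using Cl0 by simp
  have Q1: "1 \<le> Q" unfolding Q_def using QR(2,3)[OF B a g] by linarith
  have QB: "B^L * \<alpha> \<le> Q" unfolding Q_def using QR(1)[OF B a g] .
  have perk: "(df K w1 (L, 1, 1, k) x - df K w2 (L, 1, 1, k) x)^2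
      + (\<Sum>(l, i, j)\<in>S0. (df K w1 (l, k, i, j) x - df K w2 (l, k, i, j) x)^2)
      \<le> A * Q^2 * ((u (L, 1, 1, k))^2 + (E k u)^2)" if k: "k \<in> {1..K}" for k
  proof -
    let ?e = "E k u"
    have e0: "?e \<ge> 0" by (rule E_nonneg)
    have Bk1: "Bd B k w1" and Bk2: "Bd B k w2" and o2: "\<bar>w2 (L, 1, 1, k)\<bar> \<le> \<gamma>"
      using W1 W2 k unfolding Wok_def by auto
    have Dk: "Dlt k ?e w1 w2" unfolding u_def by (rule Dlt_E)
    have t1: "(df K w1 (L, 1, 1, k) x - df K w2 (L, 1, 1, k) x)^2 \<le> Cl^2 * Q^2 * ?e^2"
    proof -
      have "\<bar>df K w1 (L, 1, 1, k) x - df K w2 (L, 1, 1, k) x\<bar> = \<bar>lay w1 x L k 1 - lay w2 x L k 1\<bar>"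
        by (simp only: df_out[OF k])
      also have "\<dots> \<le> Cl * B^L * \<alpha> * ?e" by (rule Hl[OF B a e0 Bk1 Bk2 Dk X r_ge1])
      also have "\<dots> \<le> Cl * Q * ?e"
      proof -
        have "B^L * \<alpha> * ?e \<le> Q * ?e" by (rule mult_right_mono[OF QB e0])
        then have "Cl * (B^L * \<alpha> * ?e) \<le> Cl * (Q * ?e)" by (rule mult_left_mono[OF _ Cl0])
        then show ?thesis by (simp add: mult.assoc)
      qed
      finally have "\<bar>df K w1 (L, 1, 1, k) x - df K w2 (L, 1, 1, k) x\<bar> \<le> Cl * Q * ?e" .
      from sq_le[OF this] show ?thesis by (simp add: power_mult_distrib)
    qed
    have t2: "(df K w1 (l, k, i, j) x - df K w2 (l, k, i, j) x)^2
        \<le> 2 * (Cb^2 + Cd^2) * Q^2 * ((u (L, 1, 1, k))^2 + ?e^2)" if q: "(l, i, j) \<in> S0" for l i j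
    proof -
      let ?p = "(l, k, i, j)"
      have lL: "l < L" using S0_lt[OF q] .
      have "\<bar>df K w1 ?p x - df K w2 ?p x\<bar>
          = \<bar>u (L, 1, 1, k) * dl w1 ?p x L k 1 + w2 (L, 1, 1, k) * (dl w1 ?p x L k 1 - dl w2 ?p x L k 1)\<bar>"
        using k lL by (simp add: df_in u_def algebra_simps)
      also have "\<dots> \<le> \<bar>u (L, 1, 1, k)\<bar> * (Cb * B^L * \<alpha>) + \<gamma> * (Cd * (B^(2*L) * \<alpha>^2 * ?e))"
        by (rule order_trans[OF abs_triangle_ineq add_mono[OF abs_mult_le abs_mult_le]])
          (use Hb[OF B a Bk1 X r_ge1] Hd[OF B a e0 Bk1 Bk2 Dk X r_ge1] o2 in auto)
      also have "\<dots> \<le> Cb * Q * \<bar>u (L, 1, 1, k)\<bar> + Cd * Q * ?e"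
      proof -
        have "Cb * (B^L * \<alpha>) \<le> Cb * Q" by (rule mult_left_mono[OF QB Cb0])
        then have "\<bar>u (L, 1, 1, k)\<bar> * (Cb * (B^L * \<alpha>)) \<le> \<bar>u (L, 1, 1, k)\<bar> * (Cb * Q)"
          by (rule mult_left_mono) simp
        then have f1: "\<bar>u (L, 1, 1, k)\<bar> * (Cb * B^L * \<alpha>) \<le> Cb * Q * \<bar>u (L, 1, 1, k)\<bar>"
          by (simp add: mult_ac)
        have f2: "\<gamma> * (Cd * (B^(2*L) * \<alpha>^2 * ?e)) = Cd * Q * ?e"
          unfolding Q_def by (simp add: algebra_simps)
        show ?thesis using f1 f2 by linarith
      qed
      finally have h: "\<bar>df K w1 ?p x - df K w2 ?p x\<bar> \<le> Cb * Q * \<bar>u (L, 1, 1, k)\<bar> + Cd * Q * ?e" .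
      have "(df K w1 ?p x - df K w2 ?p x)^2 \<le> (Cb * Q * \<bar>u (L, 1, 1, k)\<bar> + Cd * Q * ?e)^2"
        by (rule sq_le[OF h])
      also have "\<dots> \<le> 2 * (Cb * Q * \<bar>u (L, 1, 1, k)\<bar>)^2 + 2 * (Cd * Q * ?e)^2" by (rule sq_sum_le)
      also have "\<dots> = 2 * Cb^2 * Q^2 * (u (L, 1, 1, k))^2 + 2 * Cd^2 * Q^2 * ?e^2"
        by (simp add: power_mult_distrib)
      also have "\<dots> \<le> 2 * (Cb^2 + Cd^2) * Q^2 * ((u (L, 1, 1, k))^2 + ?e^2)"
        by (simp add: algebra_simps)
      finally show ?thesis .
    qed
    have "(\<Sum>(l, i, j)\<in>S0. (df K w1 (l, k, i, j) x - df K w2 (l, k, i, j) x)^2)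
        \<le> (\<Sum>(l, i, j)\<in>S0. 2 * (Cb^2 + Cd^2) * Q^2 * ((u (L, 1, 1, k))^2 + ?e^2))"
      by (rule sum_mono) (use t2 in auto)
    also have "\<dots> = real (card S0) * (2 * (Cb^2 + Cd^2) * Q^2 * ((u (L, 1, 1, k))^2 + ?e^2))"
      by (simp add: case_prod_beta)
    finally have s2: "(\<Sum>(l, i, j)\<in>S0. (df K w1 (l, k, i, j) x - df K w2 (l, k, i, j) x)^2)
        \<le> real (card S0) * (2 * (Cb^2 + Cd^2) * Q^2 * ((u (L, 1, 1, k))^2 + ?e^2))" .
    have "Cl^2 * Q^2 * ?e^2 \<le> Cl^2 * Q^2 * ((u (L, 1, 1, k))^2 + ?e^2)"
      by (intro mult_left_mono) auto
    moreover have "A * Q^2 * ((u (L, 1, 1, k))^2 + ?e^2) = Cl^2 * Q^2 * ((u (L, 1, 1, k))^2 + ?e^2)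
        + real (card S0) * (2 * (Cb^2 + Cd^2) * Q^2 * ((u (L, 1, 1, k))^2 + ?e^2))"
      unfolding A_def by (simp add: algebra_simps)
    ultimately show ?thesis using t1 s2 by linarith
  qed
  have "(L2_set (\<lambda>p. df K w1 p x - df K w2 p x) (nn_index d r L K))^2
      = (\<Sum>k=1..K. (df K w1 (L, 1, 1, k) x - df K w2 (L, 1, 1, k) x)^2
      + (\<Sum>(l, i, j)\<in>S0. (df K w1 (l, k, i, j) x - df K w2 (l, k, i, j) x)^2))"
    unfolding L2_sq by (rule sum_nn_index)
  also have "\<dots> \<le> (\<Sum>k=1..K. A * Q^2 * ((u (L, 1, 1, k))^2 + (E k u)^2))"
    by (rule sum_mono) (rule perk)
  also have "\<dots> = A * Q^2 * (wnorm (nn_index d r L K) u)^2"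
    unfolding wnorm_sq by (simp add: sum_distrib_left)
  also have "\<dots> = (sqrt A * Q * wnorm (nn_index d r L K) u)^2"
    using A0 by (simp add: power_mult_distrib)
  finally have "(L2_set (\<lambda>p. df K w1 p x - df K w2 p x) (nn_index d r L K))^2
      \<le> (sqrt A * Q * wnorm (nn_index d r L K) u)^2" .
  then have "L2_set (\<lambda>p. df K w1 p x - df K w2 p x) (nn_index d r L K) \<le> sqrt A * Q * wnorm (nn_index d r L K) u"
    by (rule power2_le_imp_le) (use Q1 wnorm_nonneg[of "nn_index d r L K" u] A0 in simp)
  then show ?thesis unfolding A_def Q_def u_def by simp
qed

end

context nnl2
begin

lemma G2:
  fixes B \<alpha> \<gamma> :: real
  assumes B: "B \<ge> 1" and a: "\<alpha> \<ge> 1" and g: "\<gamma> \<ge> 1" and W: "Wok K \<gamma> B w" and X: "Xb \<alpha> x"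
  shows "L2_set (\<lambda>p. df K w p x) (nn_index d r L K)
     \<le> sqrt (real K) * sqrt (M^2 + real (card S0) * Cb^2) * (\<gamma> * B^L * \<alpha>)"
proof -
  define R where "R = \<gamma> * B^L * \<alpha>"
  define A where "A = M^2 + real (card S0) * Cb^2"
  have R1: "1 \<le> R" unfolding R_def using QR(2)[OF B a g] .
  have A0: "A \<ge> 0" unfolding A_def by simp
  have perk: "(df K w (L, 1, 1, k) x)^2 + (\<Sum>(l, i, j)\<in>S0. (df K w (l, k, i, j) x)^2) \<le> A * R^2"
    if k: "k \<in> {1..K}" for k
  proof -
    have Bk: "Bd B k w" and o: "\<bar>w (L, 1, 1, k)\<bar> \<le> \<gamma>" using W k unfolding Wok_def by auto
    have "(df K w (L, 1, 1, k) x)^2 = (lay w x L k 1)^2" by (simp only: df_out[OF k])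
    also have "\<dots> \<le> M^2" by (rule sq_le[OF lay_bound])
    also have "\<dots> \<le> M^2 * R^2"
    proof -
      have "1 \<le> R^2" using R1 by simp
      then have "M^2 * 1 \<le> M^2 * R^2" by (intro mult_left_mono) auto
      then show ?thesis by simp
    qed
    finally have t1: "(df K w (L, 1, 1, k) x)^2 \<le> M^2 * R^2" .
    have t2: "(df K w (l, k, i, j) x)^2 \<le> Cb^2 * R^2" if q: "(l, i, j) \<in> S0" for l i j
    proof -
      have "\<bar>df K w (l, k, i, j) x\<bar> = \<bar>w (L, 1, 1, k) * dl w (l, k, i, j) x L k 1\<bar>"
        using df_in[OF k S0_lt[OF q]] by simp
      also have "\<dots> \<le> \<gamma> * (Cb * B^L * \<alpha>)" by (rule abs_mult_le[OF o Hb[OF B a Bk X r_ge1]])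
      also have "\<dots> = Cb * R" unfolding R_def by (simp add: algebra_simps)
      finally have "\<bar>df K w (l, k, i, j) x\<bar> \<le> Cb * R" .
      from sq_le[OF this] show ?thesis by (simp add: power_mult_distrib)
    qed
    have "(\<Sum>(l, i, j)\<in>S0. (df K w (l, k, i, j) x)^2) \<le> (\<Sum>(l, i, j)\<in>S0. Cb^2 * R^2)"
      by (rule sum_mono) (use t2 in auto)
    also have "\<dots> = real (card S0) * (Cb^2 * R^2)" by (simp add: case_prod_beta)
    finally have s2: "(\<Sum>(l, i, j)\<in>S0. (df K w (l, k, i, j) x)^2) \<le> real (card S0) * (Cb^2 * R^2)" .
    have "A * R^2 = M^2 * R^2 + real (card S0) * (Cb^2 * R^2)" unfolding A_def by (simp add: algebra_simps)
    then show ?thesis using t1 s2 by linarith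
  qed
  have "(L2_set (\<lambda>p. df K w p x) (nn_index d r L K))^2
      = (\<Sum>k=1..K. (df K w (L, 1, 1, k) x)^2 + (\<Sum>(l, i, j)\<in>S0. (df K w (l, k, i, j) x)^2))"
    unfolding L2_sq by (rule sum_nn_index)
  also have "\<dots> \<le> (\<Sum>k=1..K. A * R^2)" by (rule sum_mono) (rule perk)
  also have "\<dots> = (sqrt (real K) * sqrt A * R)^2" using A0 by (simp add: power_mult_distrib)
  finally have "(L2_set (\<lambda>p. df K w p x) (nn_index d r L K))^2 \<le> (sqrt (real K) * sqrt A * R)^2" .
  then have "L2_set (\<lambda>p. df K w p x) (nn_index d r L K) \<le> sqrt (real K) * sqrt A * R"
    by (rule power2_le_imp_le) (use R1 A0 in simp)
  then show ?thesis unfolding A_def R_def .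
qed

lemma G3:
  fixes B \<alpha> \<gamma> :: real
  assumes B: "B \<ge> 1" and a: "\<alpha> \<ge> 1" and g: "\<gamma> \<ge> 1" and W1: "Wok K \<gamma> B w1" and W2: "Wok K \<gamma> B w2"
    and X: "Xb \<alpha> x"
  shows "\<bar>nn_f \<sigma> d r L K w1 x - nn_f \<sigma> d r L K w2 x\<bar>
     \<le> real K * ((M + Cl) * (\<gamma> * B^L * \<alpha>)) * wnorm (nn_index d r L K) (\<lambda>p. w1 p - w2 p)"
proof -
  define u where "u = (\<lambda>p. w1 p - w2 p)"
  define R where "R = \<gamma> * B^L * \<alpha>"
  define Wn where "Wn = wnorm (nn_index d r L K) u"
  have R1: "1 \<le> R" unfolding R_def using QR(2)[OF B a g] .
  have Wn0: "0 \<le> Wn" unfolding Wn_def by (rule wnorm_nonneg)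
  have perk: "\<bar>w1 (L, 1, 1, k) * lay w1 x L k 1 - w2 (L, 1, 1, k) * lay w2 x L k 1\<bar> \<le> (M + Cl) * R * Wn"
    if k: "k \<in> {1..K}" for k
  proof -
    have Bk1: "Bd B k w1" and Bk2: "Bd B k w2" and o: "\<bar>w2 (L, 1, 1, k)\<bar> \<le> \<gamma>"
      using W1 W2 k unfolding Wok_def by auto
    have e0: "E k u \<ge> 0" by (rule E_nonneg)
    have Dk: "Dlt k (E k u) w1 w2" unfolding u_def by (rule Dlt_E)
    have "\<bar>w1 (L, 1, 1, k) * lay w1 x L k 1 - w2 (L, 1, 1, k) * lay w2 x L k 1\<bar>
       = \<bar>u (L, 1, 1, k) * lay w1 x L k 1 + w2 (L, 1, 1, k) * (lay w1 x L k 1 - lay w2 x L k 1)\<bar>"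
      unfolding u_def by (simp add: algebra_simps)
    also have "\<dots> \<le> Wn * M + \<gamma> * (Cl * B^L * \<alpha> * E k u)"
      by (rule order_trans[OF abs_triangle_ineq add_mono[OF abs_mult_le abs_mult_le]])
        (use out_le[OF k, of u] lay_bound o Hl[OF B a e0 Bk1 Bk2 Dk X r_ge1] in \<open>auto simp: Wn_def\<close>)
    also have "\<dots> \<le> M * R * Wn + Cl * R * Wn"
    proof -
      have "Wn * M \<le> M * R * Wn"
      proof -
        have "Wn * M * 1 \<le> Wn * M * R" using R1 Wn0 M1 by (intro mult_left_mono) auto
        then show ?thesis by (simp add: mult_ac)
      qed
      moreover have "\<gamma> * (Cl * B^L * \<alpha> * E k u) \<le> Cl * R * Wn"
      proof -
        have "\<gamma> * (Cl * B^L * \<alpha> * E k u) = Cl * R * E k u" unfolding R_def by (simp add: algebra_simps)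
        also have "\<dots> \<le> Cl * R * Wn" using E_le[OF k, of u] Cl0 R1 unfolding Wn_def
          by (intro mult_left_mono) auto
        finally show ?thesis .
      qed
      ultimately show ?thesis by linarith
    qed
    also have "\<dots> = (M + Cl) * R * Wn" by (simp add: algebra_simps)
    finally show ?thesis .
  qed
  have "\<bar>nn_f \<sigma> d r L K w1 x - nn_f \<sigma> d r L K w2 x\<bar>
     = \<bar>\<Sum>k=1..K. w1 (L, 1, 1, k) * lay w1 x L k 1 - w2 (L, 1, 1, k) * lay w2 x L k 1\<bar>"
    unfolding nn_f_def by (simp add: sum_subtractf)
  also have "\<dots> \<le> (\<Sum>k=1..K. (M + Cl) * R * Wn)"
    by (rule order_trans[OF sum_abs sum_mono[OF perk]])
  also have "\<dots> = real K * ((M + Cl) * R) * Wn" by simp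
  finally show ?thesis unfolding R_def Wn_def u_def .
qed

lemma nf_bound:
  assumes "\<forall>k\<in>{1..K}. \<bar>w (L, 1, 1, k)\<bar> \<le> \<gamma>"
  shows "\<bar>nn_f \<sigma> d r L K w x\<bar> \<le> real K * (\<gamma> * M)"
proof -
  have "\<bar>nn_f \<sigma> d r L K w x\<bar> \<le> (\<Sum>k=1..K. \<bar>w (L, 1, 1, k) * lay w x L k 1\<bar>)"
    unfolding nn_f_def by (rule sum_abs)
  also have "\<dots> \<le> (\<Sum>k=1..K. \<gamma> * M)"
    by (rule sum_mono, rule abs_mult_le) (use assms lay_bound in auto)
  also have "\<dots> = real K * (\<gamma> * M)" by simp
  finally show ?thesis .
qed

lemma nf_v:
  assumes "\<forall>k\<in>{1..K}. \<bar>w (L, 1, 1, k)\<bar> \<le> \<gamma>"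
  shows "\<bar>nn_f \<sigma> d r L K w x - nn_f \<sigma> d r L K v x\<bar>
    \<le> real K * (2 * \<gamma> * M + M * wnorm (nn_index d r L K) (\<lambda>p. w p - v p))"
proof -
  let ?Wn = "wnorm (nn_index d r L K) (\<lambda>p. w p - v p)"
  have perk: "\<bar>w (L, 1, 1, k) * lay w x L k 1 - v (L, 1, 1, k) * lay v x L k 1\<bar> \<le> 2 * \<gamma> * M + M * ?Wn"
    if k: "k \<in> {1..K}" for k
  proof -
    have "\<bar>w (L, 1, 1, k) * lay w x L k 1 - v (L, 1, 1, k) * lay v x L k 1\<bar>
      = \<bar>w (L, 1, 1, k) * (lay w x L k 1 - lay v x L k 1) + (w (L, 1, 1, k) - v (L, 1, 1, k)) * lay v x L k 1\<bar>"
      by (simp add: algebra_simps)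
    also have "\<dots> \<le> \<gamma> * (2 * M) + ?Wn * M"
    proof (rule order_trans[OF abs_triangle_ineq add_mono[OF abs_mult_le abs_mult_le]])
      show "\<bar>lay w x L k 1 - lay v x L k 1\<bar> \<le> 2 * M"
        using lay_bound[of w x L k 1] lay_bound[of v x L k 1] by linarith
      show "\<bar>w (L, 1, 1, k) - v (L, 1, 1, k)\<bar> \<le> ?Wn" using out_le[OF k, of "\<lambda>p. w p - v p"] by simp
    qed (use assms k lay_bound in auto)
    finally show ?thesis by (simp add: algebra_simps)
  qed
  have "\<bar>nn_f \<sigma> d r L K w x - nn_f \<sigma> d r L K v x\<bar>
     = \<bar>\<Sum>k=1..K. w (L, 1, 1, k) * lay w x L k 1 - v (L, 1, 1, k) * lay v x L k 1\<bar>"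
    unfolding nn_f_def by (simp add: sum_subtractf)
  also have "\<dots> \<le> (\<Sum>k=1..K. 2 * \<gamma> * M + M * ?Wn)"
    by (rule order_trans[OF sum_abs sum_mono[OF perk]])
  also have "\<dots> = real K * (2 * \<gamma> * M + M * ?Wn)" by simp
  finally show ?thesis .
qed

end

lemma L2_lin_le:
  "L2_set (\<lambda>p. c * (a * u p + b * v p)) A \<le> \<bar>c\<bar> * (\<bar>a\<bar> * L2_set u A + \<bar>b\<bar> * L2_set v A)"
proof -
  have "L2_set (\<lambda>p. c * (a * u p + b * v p)) A = \<bar>c\<bar> * L2_set (\<lambda>p. a * u p + b * v p) A"
    by (rule L2_set_cmult)
  also have "\<dots> \<le> \<bar>c\<bar> * (L2_set (\<lambda>p. a * u p) A + L2_set (\<lambda>p. b * v p) A)"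
    by (intro mult_left_mono L2_set_triangle_ineq) simp
  also have "\<dots> = \<bar>c\<bar> * (\<bar>a\<bar> * L2_set u A + \<bar>b\<bar> * L2_set v A)"
    by (simp add: L2_set_cmult)
  finally show ?thesis .
qed

lemma jensen_sqrt:
  fixes a :: "nat \<Rightarrow> real"
  assumes "\<And>i. 0 \<le> a i" "(1 / real n) * (\<Sum>i=1..n. (a i)^2) \<le> F"
  shows "(1 / real n) * (\<Sum>i=1..n. a i) \<le> sqrt F"
proof (cases "n = 0")
  case True
  then show ?thesis using assms(2) by simp
next
  case False
  have "(\<Sum>i=1..n. a i)^2 \<le> (\<Sum>i=1..n. (a i)^2) * real n"
    using sum_squared_le_sum_of_squares[of a "{1..n}"] by simp
  then have "((1 / real n) * (\<Sum>i=1..n. a i))^2 \<le> (1 / real n) * (\<Sum>i=1..n. (a i)^2)"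
    using False by (simp add: power_mult_distrib power2_eq_square field_simps)
  also have "\<dots> \<le> F" by (rule assms(2))
  finally show ?thesis by (rule real_le_rsqrt)
qed

lemma pen_le:
  fixes w1 w2 :: weights and K L :: nat
  shows "\<bar>\<Sum>j=1..K. 2 * (w1 (L, 1, 1, j) - w2 (L, 1, 1, j)) * ind p (L, 1, 1, j)\<bar> \<le> 2 * \<bar>w1 p - w2 p\<bar>"
proof (cases "\<exists>j0\<in>{1..K}. p = (L, 1, 1, j0)")
  case True
  then obtain j0 where j0: "j0 \<in> {1..K}" "p = (L, 1, 1, j0)" by blast
  have "(\<Sum>j=1..K. 2 * (w1 (L, 1, 1, j) - w2 (L, 1, 1, j)) * ind p (L, 1, 1, j))
      = (\<Sum>j\<in>{1..K}. if j = j0 then 2 * (w1 p - w2 p) else 0)"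
    using j0 by (intro sum.cong) (auto simp: ind_def)
  also have "\<dots> = (if j0 \<in> {1..K} then 2 * (w1 p - w2 p) else 0)"
    by (rule sum.delta[of "{1..K}" j0 "\<lambda>_. 2 * (w1 p - w2 p)"]) simp
  also have "\<dots> = 2 * (w1 p - w2 p)" using j0 by simp
  finally have e: "(\<Sum>j=1..K. 2 * (w1 (L, 1, 1, j) - w2 (L, 1, 1, j)) * ind p (L, 1, 1, j)) = 2 * (w1 p - w2 p)" .
  show ?thesis unfolding e abs_mult by simp
next
  case False
  then have "ind p (L, 1, 1, j) = 0" if "j \<in> {1..K}" for j using that by (auto simp: ind_def)
  then have "(\<Sum>j=1..K. 2 * (w1 (L, 1, 1, j) - w2 (L, 1, 1, j)) * ind p (L, 1, 1, j)) = 0"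
    by (intro sum.neutral) auto
  then show ?thesis by simp
qed

lemma sqrt_max1: "sqrt (max F 1) = max (sqrt F) 1"
  by (cases "F \<le> 1") (auto simp: max_def)


lemma le_mult_ge1: "(a::real) \<ge> 0 \<Longrightarrow> b \<ge> 1 \<Longrightarrow> a \<le> a * b"
  using mult_left_mono[of 1 b a] by simp

lemma ge1_mult: "(a::real) \<ge> 1 \<Longrightarrow> b \<ge> 1 \<Longrightarrow> 1 \<le> a * b"
  using mult_mono[of 1 a 1 b] by simp

lemma arithA:
  fixes K \<gamma> T Qf M sF Wv :: real
  assumes K: "K \<ge> 1" and g: "\<gamma> \<ge> 1" and T: "T \<ge> 1" and Q: "Qf \<ge> 1" and M: "M \<ge> 1"
    and sF: "sF \<le> Qf" and Wv: "Wv \<le> 3 * T * Qf"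
  shows "sF + K * (4 * \<gamma> * M + M * Wv) \<le> (1 + 7 * M) * (K * \<gamma> * T * Qf)"
proof -
  let ?P = "K * \<gamma> * T * Qf"
  have Kg: "1 \<le> K * \<gamma>" using ge1_mult[OF K g] .
  have KgT: "1 \<le> K * \<gamma> * T" using ge1_mult[OF Kg T] .
  have p1: "Qf \<le> ?P" using le_mult_ge1[of Qf "K * \<gamma> * T"] Q KgT by (simp add: mult_ac)
  have TQ: "1 \<le> T * Qf" using ge1_mult[OF T Q] .
  have p2: "K * \<gamma> \<le> ?P" using le_mult_ge1[of "K * \<gamma>" "T * Qf"] Kg TQ by (simp add: mult_ac)
  have KTQ: "K * (T * Qf) \<ge> 0" using K TQ by simp
  have p3: "K * (T * Qf) \<le> ?P" using le_mult_ge1[OF KTQ g] by (simp add: mult_ac)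
  have "K * (M * Wv) \<le> K * (M * (3 * T * Qf))"
    using Wv K M by (intro mult_left_mono) auto
  also have "\<dots> = 3 * M * (K * (T * Qf))" by (simp add: mult_ac)
  also have "\<dots> \<le> 3 * M * ?P" using p3 M by (intro mult_left_mono) auto
  finally have t3: "K * (M * Wv) \<le> 3 * M * ?P" .
  have "K * (4 * \<gamma> * M) = 4 * M * (K * \<gamma>)" by (simp add: mult_ac)
  also have "\<dots> \<le> 4 * M * ?P" using p2 M by (intro mult_left_mono) auto
  finally have t2: "K * (4 * \<gamma> * M) \<le> 4 * M * ?P" .
  have "sF + K * (4 * \<gamma> * M + M * Wv) = sF + K * (4 * \<gamma> * M) + K * (M * Wv)"
    by (simp add: algebra_simps)
  also have "\<dots> \<le> ?P + 4 * M * ?P + 3 * M * ?P" using sF p1 t2 t3 by linarith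
  also have "\<dots> = (1 + 7 * M) * ?P" by (simp add: algebra_simps)
  finally show ?thesis .
qed

lemma arithBCD:
  fixes K \<gamma> T Qf B \<alpha> Kp :: real and L :: nat
  assumes K: "K \<ge> 1" and g: "\<gamma> \<ge> 1" and T: "T \<ge> 1" and Q: "Qf \<ge> 1" and B: "B \<ge> 1" and a: "\<alpha> \<ge> 1"
    and Kp: "Kp = K * sqrt K"
  shows "(\<gamma> * B^(2*L) * \<alpha>^2) * (K * \<gamma> * T * Qf) \<le> Qf * \<gamma>^2 * B^(3*L) * \<alpha>^3 * Kp * T"
    "Kp * (\<gamma> * B^L * \<alpha>)^2 \<le> Qf * \<gamma>^2 * B^(3*L) * \<alpha>^3 * Kp * T"
    "1 \<le> Qf * \<gamma>^2 * B^(3*L) * \<alpha>^3 * Kp * T"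
proof -
  have sK: "1 \<le> sqrt K" using K by simp
  have KKp: "K \<le> Kp" unfolding Kp using le_mult_ge1[of K "sqrt K"] K sK by simp
  have Kp1: "1 \<le> Kp" using KKp K by linarith
  have B23: "B^(2*L) \<le> B^(3*L)" by (rule power_increasing) (use B in auto)
  have B12: "B^L \<le> B^(2*L)" by (rule power_increasing) (use B in auto)
  have B2: "1 \<le> B^(2*L)" by (rule one_le_power) (use B in auto)
  have B3: "1 \<le> B^(3*L)" by (rule one_le_power) (use B in auto)
  have a23: "\<alpha>^2 \<le> \<alpha>^3" by (rule power_increasing) (use a in auto)
  have a2: "1 \<le> \<alpha>^2" by (rule one_le_power) (use a in auto)
  have a3: "1 \<le> \<alpha>^3" by (rule one_le_power) (use a in auto)
  have g2: "1 \<le> \<gamma>^2" by (rule one_le_power) (use g in auto)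
  have h4: "1 * 1 * 1 * 1 \<le> Qf * \<gamma>^2 * B^(3*L) * \<alpha>^3"
    using Q g2 B3 a3 by (intro mult_mono) auto
  have h3: "1 * 1 * 1 \<le> Qf * \<gamma>^2 * B^(3*L)"
    using Q g2 B3 by (intro mult_mono) auto
  have h5: "1 * 1 \<le> Qf * \<gamma>^2 * B^(3*L) * \<alpha>^3 * Kp"
    using h4 Kp1 by (intro mult_mono) auto
  have "(\<gamma> * B^(2*L) * \<alpha>^2) * (K * \<gamma> * T * Qf) = Qf * \<gamma>^2 * B^(2*L) * \<alpha>^2 * K * T"
    by (simp add: power2_eq_square mult_ac)
  also have "\<dots> \<le> Qf * \<gamma>^2 * B^(3*L) * \<alpha>^3 * Kp * T"
    using Q g2 B23 B2 a23 a2 KKp K T h4 h5 by (intro mult_mono) auto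
  finally show "(\<gamma> * B^(2*L) * \<alpha>^2) * (K * \<gamma> * T * Qf) \<le> Qf * \<gamma>^2 * B^(3*L) * \<alpha>^3 * Kp * T" .
  have "Kp * (\<gamma> * B^L * \<alpha>)^2 = 1 * \<gamma>^2 * (B^L)^2 * \<alpha>^2 * Kp * 1"
    by (simp add: power_mult_distrib mult_ac)
  also have "\<dots> \<le> Qf * \<gamma>^2 * B^(3*L) * \<alpha>^3 * Kp * T"
  proof -
    have "(B^L)^2 = B^(2*L)" by (simp add: power_mult[symmetric] mult.commute)
    then have "(B^L)^2 \<le> B^(3*L)" using B23 by simp
    moreover have "0 \<le> (B^L)^2" by simp
    ultimately show ?thesis
      using Q g2 a23 a2 Kp1 T h3 h4 h5 by (intro mult_mono) auto
  qed
  finally show "Kp * (\<gamma> * B^L * \<alpha>)^2 \<le> Qf * \<gamma>^2 * B^(3*L) * \<alpha>^3 * Kp * T" .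
  have "1 * 1 * 1 * 1 * 1 * 1 \<le> Qf * \<gamma>^2 * B^(3*L) * \<alpha>^3 * Kp * T"
    using Q g2 B3 a3 Kp1 T h3 h4 h5 by (intro mult_mono) auto
  then show "1 \<le> Qf * \<gamma>^2 * B^(3*L) * \<alpha>^3 * Kp * T" by simp
qed


context nnl2
begin

definition C7 :: "real \<Rightarrow> real" where
  "C7 c2 = 2 * sqrt (Cl^2 + 2 * real (card S0) * (Cb^2 + Cd^2)) * (1 + 7 * M)
     + 2 * ((M + Cl) * sqrt (M^2 + real (card S0) * Cb^2)) + 2 * c2 + 1"

lemma C7_pos: "c2 > 0 \<Longrightarrow> C7 c2 > 0"
proof -
  assume c: "c2 > 0"
  have "0 \<le> 2 * sqrt (Cl^2 + 2 * real (card S0) * (Cb^2 + Cd^2)) * (1 + 7 * M)" using M1 by simp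
  moreover have "0 \<le> 2 * ((M + Cl) * sqrt (M^2 + real (card S0) * Cb^2))" using M1 Cl0 by simp
  ultimately show ?thesis unfolding C7_def using c by linarith
qed

lemma grad_split:
  fixes K n :: nat and X :: "nat \<Rightarrow> nat \<Rightarrow> real" and Y :: "nat \<Rightarrow> real" and \<alpha> c2 :: real and w1 w2 :: weights
  shows "dF K c2 n X Y \<alpha> w1 p - dF K c2 n X Y \<alpha> w2 p =
    (\<Sum>i=1..n. (1 / real n) * (2 * (if (\<forall>j\<in>{1..d}. \<bar>X i j\<bar> \<le> \<alpha>) then 1 else 0)) *
       ((nn_f \<sigma> d r L K w1 (X i) - Y i) * (df K w1 p (X i) - df K w2 p (X i))
        + (nn_f \<sigma> d r L K w1 (X i) - nn_f \<sigma> d r L K w2 (X i)) * df K w2 p (X i)))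
    + c2 * (\<Sum>j=1..K. 2 * (w1 (L, 1, 1, j) - w2 (L, 1, 1, j)) * ind p (L, 1, 1, j))"
proof -
  let ?I = "\<lambda>i. (if (\<forall>j\<in>{1..d}. \<bar>X i j\<bar> \<le> \<alpha>) then 1 else 0) :: real"
  let ?f = "\<lambda>w i. nn_f \<sigma> d r L K w (X i)"
  have ring1: "a * ((2 * (f1 - y) * d1) * I) - a * ((2 * (f2 - y) * d2) * I)
     = a * (2 * I) * ((f1 - y) * (d1 - d2) + (f1 - f2) * d2)" for a f1 f2 y d1 d2 I :: real
    by (simp add: algebra_simps)
  have ring2: "2 * u1 * t - 2 * u2 * t = 2 * (u1 - u2) * t" for u1 u2 t :: real
    by (simp add: algebra_simps)
  have pa: "(1 / real n) * (\<Sum>i=1..n. (2 * (?f w1 i - Y i) * df K w1 p (X i)) * ?I i)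
      - (1 / real n) * (\<Sum>i=1..n. (2 * (?f w2 i - Y i) * df K w2 p (X i)) * ?I i)
      = (\<Sum>i=1..n. (1 / real n) * (2 * ?I i) *
       ((?f w1 i - Y i) * (df K w1 p (X i) - df K w2 p (X i)) + (?f w1 i - ?f w2 i) * df K w2 p (X i)))"
    unfolding sum_distrib_left sum_subtractf[symmetric] by (rule sum.cong[OF refl]) (rule ring1)
  have pb: "c2 * (\<Sum>j=1..K. 2 * w1 (L, 1, 1, j) * ind p (L, 1, 1, j))
      - c2 * (\<Sum>j=1..K. 2 * w2 (L, 1, 1, j) * ind p (L, 1, 1, j))
      = c2 * (\<Sum>j=1..K. 2 * (w1 (L, 1, 1, j) - w2 (L, 1, 1, j)) * ind p (L, 1, 1, j))"
    unfolding right_diff_distrib[symmetric] sum_subtractf[symmetric] ring2 ..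
  show ?thesis unfolding dF_def using pa pb by linarith
qed


lemma main_bound:
  fixes K n :: nat and X :: "nat \<Rightarrow> nat \<Rightarrow> real" and Y :: "nat \<Rightarrow> real"
    and \<alpha> Ln tn \<gamma> B c2 :: real and w1 w2 v :: weights
  assumes a: "\<alpha> \<ge> 1" and Ln: "Ln > 0" and tn: "tn \<ge> Ln" and g: "\<gamma> \<ge> 1" and B: "B \<ge> 1" and c2: "c2 > 0"
    and W1: "Wok K \<gamma> B w1" and W2: "Wok K \<gamma> B w2"
    and hv: "(wnorm (nn_index d r L K) (\<lambda>p. w2 p - v p))^2 \<le> 8 * (tn / Ln) * max (Fn \<sigma> d r L K c2 n X Y \<alpha> v) 1"
  shows "wnorm (nn_index d r L K)
        (\<lambda>p. wpartial (Fn \<sigma> d r L K c2 n X Y \<alpha>) w1 p - wpartial (Fn \<sigma> d r L K c2 n X Y \<alpha>) w2 p)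
       \<le> C7 c2 * max (sqrt (Fn \<sigma> d r L K c2 n X Y \<alpha> v)) 1 * \<gamma>^2 * B^(3*L) * \<alpha>^3
            * real K powr (3/2) * sqrt (tn / Ln) * wnorm (nn_index d r L K) (\<lambda>p. w1 p - w2 p)"
proof (cases "K = 0")
  case True
  then have "nn_index d r L K = {}" unfolding nn_index_def by auto
  then show ?thesis using True by (simp add: wnorm_def)
next
  case False
  then have K1: "real K \<ge> 1" by simp
  define I where "I = nn_index d r L K"
  define Fv where "Fv = Fn \<sigma> d r L K c2 n X Y \<alpha> v"
  define Ind where "Ind i = (if (\<forall>j\<in>{1..d}. \<bar>X i j\<bar> \<le> \<alpha>) then 1 else 0 :: real)" for i
  define f where "f w i = nn_f \<sigma> d r L K w (X i)" for w i
  define W where "W = wnorm I (\<lambda>p. w1 p - w2 p)"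
  define Wv where "Wv = wnorm I (\<lambda>p. w2 p - v p)"
  define A1 where "A1 = sqrt (Cl^2 + 2 * real (card S0) * (Cb^2 + Cd^2))"
  define A3 where "A3 = sqrt (M^2 + real (card S0) * Cb^2)"
  define Q where "Q = \<gamma> * B^(2*L) * \<alpha>^2"
  define R where "R = \<gamma> * B^L * \<alpha>"
  define T where "T = sqrt (tn / Ln)"
  define Qf where "Qf = max (sqrt Fv) 1"
  define Kp where "Kp = real K * sqrt (real K)"
  define Y0 where "Y0 = Qf * \<gamma>^2 * B^(3*L) * \<alpha>^3 * Kp * T"
  define hh where "hh i p = (1 / real n) * (2 * Ind i) * ((f w1 i - Y i) * (df K w1 p (X i) - df K w2 p (X i))
       + (f w1 i - f w2 i) * df K w2 p (X i))" for i p
  define pen where "pen (p::nat \<times> nat \<times> nat \<times> nat) = c2 * (\<Sum>j=1..K. 2 * (w1 (L, 1, 1, j) - w2 (L, 1, 1, j)) * ind p (L, 1, 1, j))" for p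
  have W0: "W \<ge> 0" unfolding W_def by (rule wnorm_nonneg)
  have Wv0: "Wv \<ge> 0" unfolding Wv_def by (rule wnorm_nonneg)
  have A10: "A1 \<ge> 0" unfolding A1_def by simp
  have A30: "A3 \<ge> 0" unfolding A3_def by simp
  have Q1: "Q \<ge> 1" unfolding Q_def using QR(2,3)[OF B a g] by linarith
  have R1: "R \<ge> 1" unfolding R_def using QR(2)[OF B a g] .
  have T1: "T \<ge> 1" unfolding T_def using Ln tn by simp
  have Qf1: "Qf \<ge> 1" unfolding Qf_def by simp
  have sFQ: "sqrt Fv \<le> Qf" unfolding Qf_def by simp
  have Ind01: "Ind i = 0 \<or> Ind i = 1" for i unfolding Ind_def by simp
  have Ind0: "Ind i \<ge> 0" for i unfolding Ind_def by simp
  have Wv3: "Wv \<le> 3 * T * Qf"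
  proof -
    have "Wv \<le> sqrt (8 * (tn / Ln) * max Fv 1)"
      by (rule real_le_rsqrt) (use hv in \<open>simp add: Wv_def I_def Fv_def\<close>)
    also have "\<dots> = sqrt 8 * T * Qf" unfolding T_def Qf_def
      by (simp only: real_sqrt_mult sqrt_max1)
    also have "\<dots> \<le> 3 * T * Qf"
    proof -
      have "sqrt 8 \<le> 3" by (rule real_le_lsqrt) auto
      then show ?thesis using T1 Qf1 by (intro mult_right_mono) auto
    qed
    finally show ?thesis .
  qed
  have split: "(\<lambda>p. wpartial (Fn \<sigma> d r L K c2 n X Y \<alpha>) w1 p - wpartial (Fn \<sigma> d r L K c2 n X Y \<alpha>) w2 p)
      = (\<lambda>p. (\<Sum>i=1..n. hh i p) + pen p)"
    unfolding wpartial_Fn hh_def pen_def Ind_def f_def by (rule ext) (rule grad_split)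
  have "wnorm I (\<lambda>p. wpartial (Fn \<sigma> d r L K c2 n X Y \<alpha>) w1 p - wpartial (Fn \<sigma> d r L K c2 n X Y \<alpha>) w2 p)
      = L2_set (\<lambda>p. (\<Sum>i=1..n. hh i p) + pen p) I"
    unfolding split wnorm_L2 ..
  also have "\<dots> \<le> L2_set (\<lambda>p. \<Sum>i=1..n. hh i p) I + L2_set pen I"
    by (rule L2_set_triangle_ineq)
  also have "\<dots> \<le> (\<Sum>i=1..n. L2_set (hh i) I) + L2_set pen I"
    by (intro add_right_mono L2_set_sum_le) simp
  finally have step1: "wnorm I (\<lambda>p. wpartial (Fn \<sigma> d r L K c2 n X Y \<alpha>) w1 p - wpartial (Fn \<sigma> d r L K c2 n X Y \<alpha>) w2 p)
      \<le> (\<Sum>i=1..n. L2_set (hh i) I) + L2_set pen I" .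
  have pen_b: "L2_set pen I \<le> 2 * c2 * W"
  proof -
    have "L2_set pen I \<le> L2_set (\<lambda>p. (2 * c2) * \<bar>w1 p - w2 p\<bar>) I"
    proof (rule L2_set_mono_abs)
      fix p
      have "\<bar>pen p\<bar> = c2 * \<bar>\<Sum>j=1..K. 2 * (w1 (L, 1, 1, j) - w2 (L, 1, 1, j)) * ind p (L, 1, 1, j)\<bar>"
        unfolding pen_def abs_mult using c2 by simp
      also have "\<dots> \<le> c2 * (2 * \<bar>w1 p - w2 p\<bar>)" using c2 pen_le by (intro mult_left_mono) auto
      finally show "\<bar>pen p\<bar> \<le> (2 * c2) * \<bar>w1 p - w2 p\<bar>" by simp
    qed
    also have "\<dots> = 2 * c2 * W"
      unfolding L2_set_cmult L2_set_abs W_def wnorm_L2 using c2 by simp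
    finally show ?thesis .
  qed
  have Wok_out: "\<forall>k\<in>{1..K}. \<bar>w (L, 1, 1, k)\<bar> \<le> \<gamma>" if "Wok K \<gamma> B w" for w
    using that unfolding Wok_def by auto
  have e1b: "\<bar>f w1 i - Y i\<bar> \<le> \<bar>f v i - Y i\<bar> + real K * (4 * \<gamma> * M + M * Wv)" for i
  proof -
    have "\<bar>f w1 i - f w2 i\<bar> \<le> real K * (\<gamma> * M) + real K * (\<gamma> * M)"
      using nf_bound[OF Wok_out[OF W1], of "X i"] nf_bound[OF Wok_out[OF W2], of "X i"]
      unfolding f_def by linarith
    moreover have "\<bar>f w2 i - f v i\<bar> \<le> real K * (2 * \<gamma> * M + M * Wv)"
      using nf_v[OF Wok_out[OF W2], of "X i" v] unfolding f_def Wv_def I_def .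
    moreover have "real K * (\<gamma> * M) + real K * (\<gamma> * M) + real K * (2 * \<gamma> * M + M * Wv)
        = real K * (4 * \<gamma> * M + M * Wv)" by (simp add: algebra_simps)
    ultimately show ?thesis by linarith
  qed
  define c1 where "c1 = A1 * Q * W"
  define d1 where "d1 = real K * ((M + Cl) * R) * W * (sqrt (real K) * A3 * R)"
  define Kc where "Kc = real K * (4 * \<gamma> * M + M * Wv)"
  have c10: "c1 \<ge> 0" unfolding c1_def using A10 Q1 W0 by simp
  have d10: "d1 \<ge> 0" unfolding d1_def using M1 Cl0 R1 W0 A30 by simp
  have Kc0: "Kc \<ge> 0" unfolding Kc_def using g M1 Wv0 by simp
  have hhb: "L2_set (hh i) I \<le> (1 / real n) * (2 * Ind i) * ((\<bar>f v i - Y i\<bar> + Kc) * c1 + d1)" for i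
  proof (cases "Ind i = 0")
    case True
    then have "hh i = (\<lambda>p. 0)" unfolding hh_def by auto
    then show ?thesis using True by (simp add: L2_set_def)
  next
    case False
    then have I1: "Ind i = 1" using Ind01 by blast
    then have X: "Xb \<alpha> (X i)" unfolding Ind_def Xb_def by (auto split: if_splits)
    have "L2_set (hh i) I \<le> \<bar>(1 / real n) * (2 * Ind i)\<bar> * (\<bar>f w1 i - Y i\<bar> * L2_set (\<lambda>p. df K w1 p (X i) - df K w2 p (X i)) I
        + \<bar>f w1 i - f w2 i\<bar> * L2_set (\<lambda>p. df K w2 p (X i)) I)"
      unfolding hh_def by (rule L2_lin_le)
    also have "\<dots> \<le> (1 / real n) * (2 * Ind i) * ((\<bar>f v i - Y i\<bar> + Kc) * c1 + d1)"
    proof (rule mult_mono)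
      show "\<bar>(1 / real n) * (2 * Ind i)\<bar> \<le> (1 / real n) * (2 * Ind i)" using I1 by simp
      have g1: "L2_set (\<lambda>p. df K w1 p (X i) - df K w2 p (X i)) I \<le> c1"
        unfolding c1_def A1_def Q_def W_def I_def wnorm_L2 using G1[OF B a g W1 W2 X] by (simp add: wnorm_L2)
      have g2: "L2_set (\<lambda>p. df K w2 p (X i)) I \<le> sqrt (real K) * A3 * R"
        unfolding A3_def R_def I_def using G2[OF B a g W2 X] .
      have g3: "\<bar>f w1 i - f w2 i\<bar> \<le> real K * ((M + Cl) * R) * W"
        unfolding f_def R_def W_def I_def using G3[OF B a g W1 W2 X] .
      have "\<bar>f w1 i - Y i\<bar> * L2_set (\<lambda>p. df K w1 p (X i) - df K w2 p (X i)) I \<le> (\<bar>f v i - Y i\<bar> + Kc) * c1"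
        using e1b[of i] g1 unfolding Kc_def by (intro mult_mono) auto
      moreover have "\<bar>f w1 i - f w2 i\<bar> * L2_set (\<lambda>p. df K w2 p (X i)) I \<le> d1"
        unfolding d1_def using g3 g2 by (intro mult_mono) (use M1 Cl0 R1 W0 K1 in auto)
      ultimately show "\<bar>f w1 i - Y i\<bar> * L2_set (\<lambda>p. df K w1 p (X i) - df K w2 p (X i)) I
        + \<bar>f w1 i - f w2 i\<bar> * L2_set (\<lambda>p. df K w2 p (X i)) I \<le> (\<bar>f v i - Y i\<bar> + Kc) * c1 + d1"
        by linarith
    qed (use I1 c10 d10 Kc0 in auto)
    finally show ?thesis .
  qed
  define ev where "ev i = \<bar>f v i - Y i\<bar>" for i
  have sumid: "(\<Sum>i=1..n. (1 / real n) * (2 * Ind i) * ((ev i + Kc) * c1 + d1))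
      = 2 * c1 * ((1 / real n) * (\<Sum>i=1..n. Ind i * ev i)) + 2 * (Kc * c1 + d1) * ((1 / real n) * (\<Sum>i=1..n. Ind i))"
  proof -
    have "(\<Sum>i=1..n. (1 / real n) * (2 * Ind i) * ((ev i + Kc) * c1 + d1))
       = (\<Sum>i=1..n. 2 * c1 * ((1 / real n) * (Ind i * ev i)) + 2 * (Kc * c1 + d1) * ((1 / real n) * Ind i))"
      by (rule sum.cong[OF refl]) (simp add: algebra_simps add_divide_distrib)
    also have "\<dots> = 2 * c1 * ((1 / real n) * (\<Sum>i=1..n. Ind i * ev i)) + 2 * (Kc * c1 + d1) * ((1 / real n) * (\<Sum>i=1..n. Ind i))"
      by (simp add: sum.distrib sum_distrib_left)
    finally show ?thesis .
  qed
  have jen: "(1 / real n) * (\<Sum>i=1..n. Ind i * ev i) \<le> sqrt Fv"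
  proof (rule jensen_sqrt)
    show "0 \<le> Ind i * ev i" for i using Ind0[of i] unfolding ev_def by simp
    have sq: "(Ind i * ev i)^2 = \<bar>nn_f \<sigma> d r L K v (X i) - Y i\<bar>^2 * (if (\<forall>j\<in>{1..d}. \<bar>X i j\<bar> \<le> \<alpha>) then 1 else 0)" for i
      unfolding Ind_def ev_def f_def by (simp add: power_mult_distrib)
    have pen0: "0 \<le> c2 * (\<Sum>j=1..K. (v (L, 1, 1, j))^2)" using c2 by (simp add: sum_nonneg)
    show "(1 / real n) * (\<Sum>i=1..n. (Ind i * ev i)^2) \<le> Fv"
      unfolding sq Fv_def Fn_def using pen0 by linarith
  qed
  have ind1: "(1 / real n) * (\<Sum>i=1..n. Ind i) \<le> 1"
  proof (cases "n = 0")
    case False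
    have "(\<Sum>i=1..n. Ind i) \<le> (\<Sum>i=1..n. 1)" by (rule sum_mono) (simp add: Ind_def)
    then have "(\<Sum>i=1..n. Ind i) \<le> real n" by simp
    then show ?thesis using False by (simp add: field_simps)
  qed simp
  have sum_hh: "(\<Sum>i=1..n. L2_set (hh i) I) \<le> 2 * c1 * sqrt Fv + 2 * (Kc * c1 + d1)"
  proof -
    have "(\<Sum>i=1..n. L2_set (hh i) I) \<le> (\<Sum>i=1..n. (1 / real n) * (2 * Ind i) * ((ev i + Kc) * c1 + d1))"
      by (rule sum_mono) (use hhb in \<open>simp add: ev_def\<close>)
    also have "\<dots> \<le> 2 * c1 * sqrt Fv + 2 * (Kc * c1 + d1)"
    proof -
      have "2 * c1 * ((1 / real n) * (\<Sum>i=1..n. Ind i * ev i)) \<le> 2 * c1 * sqrt Fv"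
        using jen c10 by (intro mult_left_mono) auto
      moreover have "2 * (Kc * c1 + d1) * ((1 / real n) * (\<Sum>i=1..n. Ind i)) \<le> 2 * (Kc * c1 + d1) * 1"
        using ind1 c10 d10 Kc0 by (intro mult_left_mono) auto
      ultimately show ?thesis unfolding sumid by linarith
    qed
    finally show ?thesis .
  qed
  have aA: "sqrt Fv + Kc \<le> (1 + 7 * M) * (real K * \<gamma> * T * Qf)"
    unfolding Kc_def by (rule arithA[OF K1 g T1 Qf1 M1 sFQ Wv3])
  have KpE: "real K powr (3/2) = Kp"
  proof -
    have "real K powr (3/2) = real K powr (1 + 1/2)" by simp
    also have "\<dots> = real K powr 1 * real K powr (1/2)" by (rule powr_add)
    also have "\<dots> = Kp" unfolding Kp_def using K1 by (simp add: powr_half_sqrt)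
    finally show ?thesis .
  qed
  note BCD = arithBCD[OF K1 g T1 Qf1 B a Kp_def, of L]
  have Y01: "1 \<le> Y0" unfolding Y0_def using BCD(3) .
  have t1: "2 * c1 * sqrt Fv + 2 * (Kc * c1) \<le> 2 * (A1 * (1 + 7 * M)) * (Y0 * W)"
  proof -
    have "2 * c1 * sqrt Fv + 2 * (Kc * c1) = 2 * (A1 * W) * (Q * (sqrt Fv + Kc))"
      unfolding c1_def by (simp add: algebra_simps)
    also have "\<dots> \<le> 2 * (A1 * W) * (Q * ((1 + 7 * M) * (real K * \<gamma> * T * Qf)))"
      using aA Q1 A10 W0 by (intro mult_left_mono) auto
    also have "\<dots> = 2 * (A1 * (1 + 7 * M)) * W * (Q * (real K * \<gamma> * T * Qf))"
      by (simp add: algebra_simps)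
    also have "\<dots> \<le> 2 * (A1 * (1 + 7 * M)) * W * Y0"
      using BCD(1) A10 M1 W0 unfolding Q_def Y0_def by (intro mult_left_mono) auto
    finally show ?thesis by (simp add: algebra_simps)
  qed
  have t2: "2 * d1 \<le> 2 * ((M + Cl) * A3) * (Y0 * W)"
  proof -
    have "2 * d1 = 2 * ((M + Cl) * A3) * W * (Kp * R^2)"
      unfolding d1_def Kp_def by (simp add: power2_eq_square algebra_simps)
    also have "\<dots> \<le> 2 * ((M + Cl) * A3) * W * Y0"
      using BCD(2) M1 Cl0 A30 W0 unfolding R_def Y0_def by (intro mult_left_mono) auto
    finally show ?thesis by (simp add: algebra_simps)
  qed
  have t3: "2 * c2 * W \<le> 2 * c2 * (Y0 * W)"
  proof -
    have "W \<le> W * Y0" by (rule le_mult_ge1[OF W0 Y01])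
    then have "W \<le> Y0 * W" by (simp add: mult.commute)
    then show ?thesis using c2 by (intro mult_left_mono) auto
  qed
  have YW0: "0 \<le> Y0 * W" using Y01 W0 by simp
  have final: "wnorm I (\<lambda>p. wpartial (Fn \<sigma> d r L K c2 n X Y \<alpha>) w1 p - wpartial (Fn \<sigma> d r L K c2 n X Y \<alpha>) w2 p)
      \<le> C7 c2 * (Y0 * W)"
  proof -
    have "C7 c2 * (Y0 * W) = 2 * (A1 * (1 + 7 * M)) * (Y0 * W) + 2 * ((M + Cl) * A3) * (Y0 * W)
        + 2 * c2 * (Y0 * W) + Y0 * W"
      unfolding C7_def A1_def A3_def by (simp add: algebra_simps)
    moreover have "2 * (Kc * c1 + d1) = 2 * (Kc * c1) + 2 * d1" by simp
    ultimately show ?thesis using step1 pen_b sum_hh t1 t2 t3 YW0 by linarith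
  qed
  have eqR: "C7 c2 * max (sqrt (Fn \<sigma> d r L K c2 n X Y \<alpha> v)) 1 * \<gamma>^2 * B^(3*L) * \<alpha>^3
            * real K powr (3/2) * sqrt (tn / Ln) * wnorm (nn_index d r L K) (\<lambda>p. w1 p - w2 p) = C7 c2 * (Y0 * W)"
    unfolding KpE Y0_def W_def I_def Qf_def Fv_def T_def by (simp add: mult_ac)
  show ?thesis unfolding eqR using final[unfolded I_def] .
qed

end

theorem lemma3:
  fixes \<sigma> :: "real \<Rightarrow> real" and d r L :: nat and c2 :: real
  assumes sigma_bounded: "\<exists>M. \<forall>x. \<bar>\<sigma> x\<bar> \<le> M"
    and sigma_diff: "\<forall>x. \<sigma> differentiable (at x)"
    and sigma_deriv_lip: "\<exists>C. \<forall>x y. \<bar>deriv \<sigma> x - deriv \<sigma> y\<bar> \<le> C * \<bar>x - y\<bar>"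
    and sigma_deriv_bounded: "\<exists>M. \<forall>x. \<bar>deriv \<sigma> x\<bar> \<le> M"
    and d_pos: "d \<ge> 1" and L_pos: "L \<ge> 1" and r_ge: "r \<ge> 2 * d" and c2_pos: "c2 > 0"
  shows "\<exists>c7 > 0. \<forall>(K::nat) (n::nat) (X :: nat \<Rightarrow> nat \<Rightarrow> real) (Y :: nat \<Rightarrow> real)
            (\<alpha>::real) (Ln::real) (tn::real) (\<gamma>::real) (B::real) (w1::weights) (w2::weights) (v::weights).
     \<alpha> \<ge> 1 \<longrightarrow> Ln > 0 \<longrightarrow> tn \<ge> Ln \<longrightarrow> \<gamma> \<ge> 1 \<longrightarrow> B \<ge> 1 \<longrightarrow>
     (\<forall>k\<in>{1..K}. max \<bar>w1 (L, 1, 1, k)\<bar> \<bar>w2 (L, 1, 1, k)\<bar> \<le> \<gamma>) \<longrightarrow>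
     (\<forall>l\<in>{1..L-1}. \<forall>k\<in>{1..K}. \<forall>i\<in>{1..r}. \<forall>j\<in>{0..r}.
         max \<bar>w1 (l, k, i, j)\<bar> \<bar>w2 (l, k, i, j)\<bar> \<le> B) \<longrightarrow>
     (wnorm (nn_index d r L K) (\<lambda>p. w2 p - v p))^2
        \<le> 8 * (tn / Ln) * max (Fn \<sigma> d r L K c2 n X Y \<alpha> v) 1 \<longrightarrow>
     wnorm (nn_index d r L K)
        (\<lambda>p. wpartial (Fn \<sigma> d r L K c2 n X Y \<alpha>) w1 p - wpartial (Fn \<sigma> d r L K c2 n X Y \<alpha>) w2 p)
       \<le> c7 * max (sqrt (Fn \<sigma> d r L K c2 n X Y \<alpha> v)) 1 * \<gamma>^2 * B^(3*L) * \<alpha>^3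
            * real K powr (3/2) * sqrt (tn / Ln) * wnorm (nn_index d r L K) (\<lambda>p. w1 p - w2 p)"
proof -
  obtain M0 where M0: "\<forall>x. \<bar>\<sigma> x\<bar> \<le> M0" using sigma_bounded by blast
  obtain D0 where D0: "\<forall>x. \<bar>deriv \<sigma> x\<bar> \<le> D0" using sigma_deriv_bounded by blast
  obtain C0 where C0: "\<forall>x y. \<bar>deriv \<sigma> x - deriv \<sigma> y\<bar> \<le> C0 * \<bar>x - y\<bar>" using sigma_deriv_lip by blast
  define M where "M = max M0 1"
  define D where "D = max D0 1"
  define Lc where "Lc = max C0 0"
  have nn: "nnl \<sigma> r L M D Lc"
  proof
    show "\<bar>\<sigma> x\<bar> \<le> M" for x using M0 unfolding M_def by (meson max.coboundedI1)
    show "1 \<le> M" unfolding M_def by simp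
    show "(\<sigma> has_real_derivative deriv \<sigma> x) (at x)" for x
      using sigma_diff DERIV_deriv_iff_real_differentiable by blast
    show "\<bar>deriv \<sigma> x\<bar> \<le> D" for x using D0 unfolding D_def by (meson max.coboundedI1)
    show "1 \<le> D" unfolding D_def by simp
    show "\<bar>deriv \<sigma> x - deriv \<sigma> y\<bar> \<le> Lc * \<bar>x - y\<bar>" for x y
    proof -
      have "C0 * \<bar>x - y\<bar> \<le> Lc * \<bar>x - y\<bar>" unfolding Lc_def by (intro mult_right_mono) auto
      then show ?thesis using C0 by (meson order_trans)
    qed
    show "0 \<le> Lc" unfolding Lc_def by simp
    show "1 \<le> r" using r_ge d_pos by simp
    show "1 \<le> L" by (rule L_pos)
  qed
  interpret nnl \<sigma> d r L M D Lc by (rule nn)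
  obtain Cl where Cl0: "Cl \<ge> 0" and Hl: "\<forall>B \<alpha> \<delta> w1 w2 x k i. B \<ge> 1 \<longrightarrow> \<alpha> \<ge> 1 \<longrightarrow> \<delta> \<ge> 0 \<longrightarrow> Bd B k w1 \<longrightarrow> Bd B k w2
     \<longrightarrow> Dlt k \<delta> w1 w2 \<longrightarrow> Xb \<alpha> x \<longrightarrow> i \<in> {1..r} \<longrightarrow> L \<le> L \<longrightarrow>
     \<bar>lay w1 x L k i - lay w2 x L k i\<bar> \<le> Cl * B^L * \<alpha> * \<delta>"
    using lay_lip[of L] by blast
  obtain Cb where Cb0: "Cb \<ge> 0" and Hb: "\<forall>B \<alpha> w x k i (p::nat \<times> nat \<times> nat \<times> nat). B \<ge> 1 \<longrightarrow> \<alpha> \<ge> 1 \<longrightarrow> Bd B k w \<longrightarrow> Xb \<alpha> x \<longrightarrow> i \<in> {1..r} \<longrightarrow> L \<le> L \<longrightarrow>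
     \<bar>dl w p x L k i\<bar> \<le> Cb * B^L * \<alpha>"
    using dl_bound[of L] by blast
  obtain Cd where Cd0: "Cd \<ge> 0" and Hd: "\<forall>B \<alpha> \<delta> w1 w2 x k i (p::nat \<times> nat \<times> nat \<times> nat). B \<ge> 1 \<longrightarrow> \<alpha> \<ge> 1 \<longrightarrow> \<delta> \<ge> 0 \<longrightarrow> Bd B k w1 \<longrightarrow> Bd B k w2
     \<longrightarrow> Dlt k \<delta> w1 w2 \<longrightarrow> Xb \<alpha> x \<longrightarrow> i \<in> {1..r} \<longrightarrow> L \<le> L \<longrightarrow>
     \<bar>dl w1 p x L k i - dl w2 p x L k i\<bar> \<le> Cd * (B^(2*L) * \<alpha>^2 * \<delta>)"
    using dl_lip[of L] by blast
  interpret nnl2 \<sigma> d r L M D Lc Cl Cb Cd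
  proof (rule nnl2.intro[OF nn], unfold_locales)
    show "0 \<le> Cl" "0 \<le> Cb" "0 \<le> Cd" by (fact Cl0 Cb0 Cd0)+
    show "\<And>B \<alpha> \<delta> w1 w2 x k i. B \<ge> 1 \<Longrightarrow> \<alpha> \<ge> 1 \<Longrightarrow> \<delta> \<ge> 0 \<Longrightarrow> Bd B k w1 \<Longrightarrow> Bd B k w2
     \<Longrightarrow> Dlt k \<delta> w1 w2 \<Longrightarrow> Xb \<alpha> x \<Longrightarrow> i \<in> {1..r} \<Longrightarrow>
     \<bar>lay w1 x L k i - lay w2 x L k i\<bar> \<le> Cl * B^L * \<alpha> * \<delta>" using Hl by blast
    show "\<And>B \<alpha> w x k i p. B \<ge> 1 \<Longrightarrow> \<alpha> \<ge> 1 \<Longrightarrow> Bd B k w \<Longrightarrow> Xb \<alpha> x \<Longrightarrow> i \<in> {1..r} \<Longrightarrow>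
     \<bar>dl w p x L k i\<bar> \<le> Cb * B^L * \<alpha>" using Hb by blast
    show "\<And>B \<alpha> \<delta> w1 w2 x k i p. B \<ge> 1 \<Longrightarrow> \<alpha> \<ge> 1 \<Longrightarrow> \<delta> \<ge> 0 \<Longrightarrow> Bd B k w1 \<Longrightarrow> Bd B k w2
     \<Longrightarrow> Dlt k \<delta> w1 w2 \<Longrightarrow> Xb \<alpha> x \<Longrightarrow> i \<in> {1..r} \<Longrightarrow>
     \<bar>dl w1 p x L k i - dl w2 p x L k i\<bar> \<le> Cd * (B^(2*L) * \<alpha>^2 * \<delta>)" using Hd by blast
  qed
  show ?thesis
  proof (intro exI[of _ "C7 c2"] conjI allI impI)
    show "0 < C7 c2" by (rule C7_pos[OF c2_pos])
    fix K n X Y \<alpha> Ln tn \<gamma> B w1 w2 v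
    assume a: "(\<alpha>::real) \<ge> 1" and Ln: "(Ln::real) > 0" and tn: "tn \<ge> Ln" and g: "(\<gamma>::real) \<ge> 1" and B: "(B::real) \<ge> 1"
      and ho: "\<forall>k\<in>{1..K}. max \<bar>w1 (L, 1, 1, k)\<bar> \<bar>w2 (L, 1, 1, k)\<bar> \<le> \<gamma>"
      and hi: "\<forall>l\<in>{1..L-1}. \<forall>k\<in>{1..K}. \<forall>i\<in>{1..r}. \<forall>j\<in>{0..r}. max \<bar>w1 (l, k, i, j)\<bar> \<bar>w2 (l, k, i, j)\<bar> \<le> B"
      and hv: "(wnorm (nn_index d r L K) (\<lambda>p. w2 p - v p))^2 \<le> 8 * (tn / Ln) * max (Fn \<sigma> d r L K c2 n X Y \<alpha> v) 1"
    have W1: "Wok K \<gamma> B w1" and W2: "Wok K \<gamma> B w2"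
      using ho hi unfolding Wok_def Bd_def by auto
    show "wnorm (nn_index d r L K)
        (\<lambda>p. wpartial (Fn \<sigma> d r L K c2 n X Y \<alpha>) w1 p - wpartial (Fn \<sigma> d r L K c2 n X Y \<alpha>) w2 p)
       \<le> C7 c2 * max (sqrt (Fn \<sigma> d r L K c2 n X Y \<alpha> v)) 1 * \<gamma>^2 * B^(3*L) * \<alpha>^3
            * real K powr (3/2) * sqrt (tn / Ln) * wnorm (nn_index d r L K) (\<lambda>p. w1 p - w2 p)"
      by (rule main_bound[OF a Ln tn g B c2_pos W1 W2 hv])
  qed
qed


end
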